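(* Let $A=\mathbb{C}[x_1,x_2,\dots]$ and let $d:A\to A$ be the derivation with $dx_1=0$ and $dx_i=x_{i-1}$ for $i>1$. For any integers $n\ge\ell\ge1$, any $i\ge0$, and any $\beta=(\beta_1,\dots,\beta_\ell)\in B^{(\ell)}_n(i)$, $$d\,g_{(\beta_1,\dots,\beta_\ell)}(\vec x)=\begin{cases}0,& i=0,\\ g_{(\beta_1-1,\beta_2,\dots,\beta_\ell)}(\vec x),& i>0.\end{cases}$$
   Context: For $n\ge\ell\ge1$, $B^{(\ell)}_n=\{\beta=(\beta_1,\dots,\beta_\ell)\in\mathbb{Z}^\ell:\beta_1,\dots,\beta_{\ell-1}\ge0,\ \beta_\ell\ge1,\ \beta_1+2\beta_2+\cdots+\ell\beta_\ell=n\}$. For $i\ge0$ and $n\ge\ell>1$, $B^{(\ell)}_n(i)=\{\beta\in B^{(\ell)}_n:\beta_1=i\}$; for $\ell=1$, $B^{(1)}_n(i)=\{(i+1)\}$ if $n=i+1$ and $\emptyset$ otherwise. For $\vec k=(k_1,\dots,k_\ell)$, $e_j(\vec k)$ is the $j$-th elementary symmetric polynomial and $e^\beta(\vec k)=e_1(\vec k)^{\beta_1}\cdots e_\ell(\vec k)^{\beta_\ell}$. For $\beta\in B^{(\ell)}_n$ the polynomial $g_\beta(\vec x)\in A$ is defined by $$\sum_{\substack{i_1,\dots,i_\ell\ge1\\ i_1+\cdots+i_\ell=n}} k_1^{i_1}\cdots k_\ell^{i_\ell}x_{i_1}\cdots x_{i_\ell}=\sum_{\beta\in B^{(\ell)}_n}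 e^\beta(k_1,\dots,k_\ell)\,g_\beta(\vec x)$$ (in particular $g_{(m)}(\vec x)=x_m$ for $\ell=1$). *)

theory Defs
  imports Complex_Main "HOL-Library.Poly_Mapping"
begin

text \<open>The variable x_i (i \<ge> 1) is the monomial with exponent 1 at index i.\<close>

type_synonym poly_A = "(nat \<Rightarrow>\<^sub>0 nat) \<Rightarrow>\<^sub>0 complex"

definition X :: "nat \<Rightarrow> poly_A" where
  "X i = Poly_Mapping.single (Poly_Mapping.single i 1) 1"

definition const :: "complex \<Rightarrow> poly_A" where
  "const c = Poly_Mapping.single 0 c"

definition is_d :: "(poly_A \<Rightarrow> poly_A) \<Rightarrow> bool" where
  "is_d d \<longleftrightarrow>
     (\<forall>p q. d (p + q) = d p + d q) \<and>
     (\<forall>p q. d (p * q) = p * d q + q * d p) \<and>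
     (\<forall>c p. d (const c * p) = const c * d p) \<and>
     d (X 1) = 0 \<and>
     (\<forall>i>1. d (X i) = X (i - 1))"

definition esym :: "nat \<Rightarrow> complex list \<Rightarrow> complex" where
  "esym j ks = (\<Sum>S\<in>{S. S \<subseteq> {..<length ks} \<and> card S = j}. \<Prod>s\<in>S. ks ! s)"

text \<open>beta = (beta_1,...,beta_l) is the list [beta!0, ..., beta!(l-1)].\<close>
definition ebeta :: "nat list \<Rightarrow> complex list \<Rightarrow> complex" where
  "ebeta \<beta> ks = (\<Prod>j<length \<beta>. esym (j + 1) ks ^ (\<beta> ! j))"

definition Bset :: "nat \<Rightarrow> nat \<Rightarrow> nat list set" where
  "Bset n l = {\<beta>. length \<beta> = l \<and> l \<ge> 1 \<and> \<beta> ! (l - 1) \<ge> 1 \<and>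
                   (\<Sum>j<l. (j + 1) * \<beta> ! j) = n}"

definition Bset_i :: "nat \<Rightarrow> nat \<Rightarrow> nat \<Rightarrow> nat list set" where
  "Bset_i n l i = (if l > 1 then {\<beta> \<in> Bset n l. \<beta> ! 0 = i}
                   else if l = 1 \<and> n = i + 1 then {[i + 1]} else {})"

definition gen_lhs :: "nat \<Rightarrow> complex list \<Rightarrow> poly_A" where
  "gen_lhs n ks = (\<Sum>is\<in>{is. length is = length ks \<and> (\<forall>a\<in>set is. a \<ge> 1) \<and> sum_list is = n}.
      const (\<Prod>j<length ks. (ks ! j) ^ (is ! j)) * (\<Prod>j<length ks. X (is ! j)))"

definition gfam :: "nat \<Rightarrow> nat \<Rightarrow> nat list \<Rightarrow> poly_A" where
  "gfam n l = (THE G. (\<forall>\<beta>. \<beta> \<notin> Bset n l \<longrightarrow> G \<beta> = 0) \<and>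
      (\<forall>ks. length ks = l \<longrightarrow> gen_lhs n ks = (\<Sum>\<beta>\<in>Bset n l. const (ebeta \<beta> ks) * G \<beta>)))"

definition g :: "nat list \<Rightarrow> poly_A" where
  "g \<beta> = gfam (\<Sum>j<length \<beta>. (j + 1) * \<beta> ! j) (length \<beta>) \<beta>"

end

theory Submission
  imports Defs "HOL-Computational_Algebra.Polynomial"
begin

lemma const_mult: "const (a*b) = const a * const b" unfolding const_def by (simp add: mult_single)
lemma const_add: "const (a+b) = const a + const b" unfolding const_def by (simp add: single_add)
lemma const_0[simp]: "const 0 = 0" unfolding const_def by simp
lemma const_1[simp]: "const 1 = 1" unfolding const_def by simp
lemma const_diff: "const (a-b) = const a - const b" unfolding const_def by (simp add: single_diff)
lemma const_sum: "const (sum f A) = (\<Sum>x\<in>A. const (f x))"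
  by (induction A rule: infinite_finite_induct) (auto simp: const_add)
lemma const_prod: "const (prod f A) = (\<Prod>x\<in>A. const (f x))"
  by (induction A rule: infinite_finite_induct) (auto simp: const_mult)
lemma const_power: "const (a^n) = const a ^ n"
  by (induction n) (auto simp: const_mult)
lemma lookup_const_mult: "Poly_Mapping.lookup (const a * p) m = a * Poly_Mapping.lookup p m"
  unfolding const_def mult_map_scale_conv_mult[symmetric] by (simp add: Poly_Mapping.map.rep_eq when_def)

lemma univ_zero:
  fixes p :: "nat \<Rightarrow> complex"
  assumes "finite B" "\<And>z. (\<Sum>b\<in>B. z ^ b * p b) = 0" "b \<in> B"
  shows "p b = 0"
proof -
  define q where "q = (\<Sum>b\<in>B. monom (p b) b)"
  have "poly q = poly 0"
    using assms(2) by (auto simp: q_def poly_sum poly_monom fun_eq_iff mult.commute)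
  hence "q = 0" by (simp add: poly_eq_poly_eq_iff)
  hence "coeff q b = 0" by simp
  moreover have "coeff q b = p b"
    unfolding q_def coeff_sum coeff_monom using assms(1,3)
    by (simp add: sum.delta)
  ultimately show ?thesis by simp
qed

definition mon :: "complex list \<Rightarrow> nat list \<Rightarrow> complex" where
  "mon ks is = (\<Prod>j<length ks. ks!j ^ is!j)"

lemma mon_Cons: "mon (z # ks) (b # t) = z ^ b * mon ks t"
  unfolding mon_def by (simp only: length_Cons prod.lessThan_Suc_shift) simp

lemma mon_Nil: "mon [] is = 1" unfolding mon_def by simp

lemma idt_C:
  fixes a :: "nat list \<Rightarrow> complex"
  assumes "finite F" "\<forall>is\<in>F. length is = l"
    "\<forall>ks. length ks = l \<longrightarrow> (\<Sum>is\<in>F. mon ks is * a is) = 0" "is \<in> F"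
  shows "a is = 0"
  using assms
proof (induction l arbitrary: F a "is")
  case 0
  then have "F = {[]}" by auto
  with 0 show ?case by (auto simp: mon_Nil)
next
  case (Suc l)
  obtain b t where ist: "is = b # t" using Suc.prems(2,4) by (cases "is") auto
  define R where "R b = {t. b # t \<in> F}" for b
  have finR: "finite (R b)" for b
  proof -
    have "R b \<subseteq> tl ` F" unfolding R_def by (force simp: image_iff)
    thus ?thesis using Suc.prems(1) finite_surj by blast
  qed
  have lenR: "\<forall>t\<in>R b. length t = l" for b using Suc.prems(2) by (auto simp: R_def)
  have grp: "(\<Sum>is\<in>F. mon (z # ks) is * a is) = (\<Sum>b\<in>hd ` F. z ^ b * (\<Sum>t\<in>R b. mon ks t * a (b # t)))"
    for z ks
  proof -
    have "(\<Sum>is\<in>F. mon (z # ks) is * a is) = (\<Sum>b\<in>hd ` F. \<Sum>is\<in>{x\<in>F. hd x = b}. mon (z # ks) is * a is)"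
      using Suc.prems(1) by (rule sum.image_gen)
    also have "\<dots> = (\<Sum>b\<in>hd ` F. z ^ b * (\<Sum>t\<in>R b. mon ks t * a (b # t)))"
    proof (rule sum.cong[OF refl])
      fix b assume "b \<in> hd ` F"
      have "{x\<in>F. hd x = b} = (Cons b) ` R b"
        using Suc.prems(2) by (auto simp: R_def image_iff) (metis Zero_not_Suc length_0_conv list.collapse)
      hence "(\<Sum>is\<in>{x\<in>F. hd x = b}. mon (z # ks) is * a is) = (\<Sum>t\<in>R b. mon (z # ks) (b#t) * a (b#t))"
        by (simp add: sum.reindex)
      also have "\<dots> = z ^ b * (\<Sum>t\<in>R b. mon ks t * a (b # t))"
        by (simp add: mon_Cons sum_distrib_left mult.assoc)
      finally show "(\<Sum>is\<in>{x\<in>F. hd x = b}. mon (z # ks) is * a is) = z ^ b * (\<Sum>t\<in>R b. mon ks t * a (b # t))" .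
    qed
    finally show ?thesis .
  qed
  have "b \<in> hd ` F" using Suc.prems(4) ist by force
  have zero: "(\<Sum>t\<in>R b. mon ks t * a (b # t)) = 0" if "length ks = l" for ks
  proof (rule univ_zero[where B="hd ` F" and p="\<lambda>b. \<Sum>t\<in>R b. mon ks t * a (b # t)"])
    show "finite (hd ` F)" using Suc.prems(1) by simp
    show "b \<in> hd ` F" by fact
    fix z show "(\<Sum>b\<in>hd ` F. z ^ b * (\<Sum>t\<in>R b. mon ks t * a (b # t))) = 0"
      using Suc.prems(3) grp[of z ks] that by (metis length_Cons)
  qed
  have "t \<in> R b" using Suc.prems(4) ist by (simp add: R_def)
  from Suc.IH[OF finR lenR _ this, of "\<lambda>t. a (b # t)"] zero show ?case by (simp add: ist)
qed

definition polyf :: "(nat list \<Rightarrow> poly_A) \<Rightarrow> nat list set \<Rightarrow> complex list \<Rightarrow> poly_A" where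
  "polyf c F ks = (\<Sum>is\<in>F. const (mon ks is) * c is)"

lemma idt:
  assumes "finite F" "\<forall>is\<in>F. length is = l"
    "\<forall>ks. length ks = l \<longrightarrow> polyf c F ks = 0" "is \<in> F"
  shows "c is = 0"
proof (rule poly_mapping_eqI)
  fix m
  have "Poly_Mapping.lookup (c is) m = 0"
  proof (rule idt_C[OF assms(1,2) _ assms(4)])
    show "\<forall>ks. length ks = l \<longrightarrow> (\<Sum>is\<in>F. mon ks is * Poly_Mapping.lookup (c is) m) = 0"
    proof (intro allI impI)
      fix ks :: "complex list" assume "length ks = l"
      hence "Poly_Mapping.lookup (polyf c F ks) m = 0" using assms(3) by simp
      thus "(\<Sum>is\<in>F. mon ks is * Poly_Mapping.lookup (c is) m) = 0"
        by (simp add: polyf_def lookup_sum lookup_const_mult)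
    qed
  qed
  thus "Poly_Mapping.lookup (c is) m = Poly_Mapping.lookup 0 m" by simp
qed


definition Comp :: "nat \<Rightarrow> nat \<Rightarrow> nat list set" where
  "Comp l n = {is. length is = l \<and> sum_list is = n}"

lemma finite_Comp: "finite (Comp l n)"
proof -
  have "Comp l n \<subseteq> {xs. set xs \<subseteq> {0..n} \<and> length xs = l}"
    unfolding Comp_def using member_le_sum_list by fastforce
  thus ?thesis using finite_lists_length_eq[of "{0..n}" l] finite_subset by blast
qed

definition hom :: "nat \<Rightarrow> nat \<Rightarrow> (complex list \<Rightarrow> poly_A) \<Rightarrow> bool" where
  "hom l n f \<longleftrightarrow> (\<exists>F c. finite F \<and> F \<subseteq> Comp l n \<and> (\<forall>ks. length ks = l \<longrightarrow> f ks = polyf c F ks))"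

lemma hom_canon:
  assumes "hom l n f"
  shows "\<exists>c. \<forall>ks. length ks = l \<longrightarrow> f ks = polyf c (Comp l n) ks"
proof -
  obtain F c where F: "finite F" "F \<subseteq> Comp l n" "\<forall>ks. length ks = l \<longrightarrow> f ks = polyf c F ks"
    using assms unfolding hom_def by blast
  define c' where "c' is = (if is \<in> F then c is else 0)" for "is"
  have "polyf c F ks = polyf c' (Comp l n) ks" for ks
    unfolding polyf_def
    by (rule sum.mono_neutral_cong_left) (use F finite_Comp in \<open>auto simp: c'_def\<close>)
  thus ?thesis using F by auto
qed

lemma hom_norm:
  assumes "finite I" "ex ` I \<subseteq> Comp l n"
    "\<forall>ks. length ks = l \<longrightarrow> f ks = (\<Sum>i\<in>I. const (mon ks (ex i)) * a i)"
  shows "hom l n f"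
  unfolding hom_def
proof (intro exI conjI allI impI)
  show "finite (ex ` I)" using assms(1) by simp
  show "ex ` I \<subseteq> Comp l n" by fact
  fix ks :: "complex list" assume "length ks = l"
  have "f ks = (\<Sum>i\<in>I. const (mon ks (ex i)) * a i)" using assms(3) \<open>length ks = l\<close> by simp
  also have "\<dots> = (\<Sum>is\<in>ex ` I. \<Sum>i\<in>{x\<in>I. ex x = is}. const (mon ks (ex i)) * a i)"
    using assms(1) by (rule sum.image_gen)
  also have "\<dots> = polyf (\<lambda>is. \<Sum>i\<in>{x\<in>I. ex x = is}. a i) (ex ` I) ks"
    unfolding polyf_def by (auto simp: sum_distrib_left intro!: sum.cong)
  finally show "f ks = polyf (\<lambda>is. \<Sum>i\<in>{x\<in>I. ex x = is}. a i) (ex ` I) ks" .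
qed

lemma hom_zero: "hom l n (\<lambda>_. 0)"
  unfolding hom_def polyf_def by (rule exI[of _ "{}"]) auto

lemma hom_add: "hom l n f \<Longrightarrow> hom l n q \<Longrightarrow> hom l n (\<lambda>ks. f ks + q ks)"
proof -
  assume "hom l n f" "hom l n q"
  then obtain c d where "\<forall>ks. length ks = l \<longrightarrow> f ks = polyf c (Comp l n) ks"
     "\<forall>ks. length ks = l \<longrightarrow> q ks = polyf d (Comp l n) ks" using hom_canon by metis
  thus ?thesis unfolding hom_def using finite_Comp
    by (intro exI[of _ "Comp l n"] exI[of _ "\<lambda>is. c is + d is"]) (auto simp: polyf_def distrib_left sum.distrib)
qed

lemma hom_scal: "hom l n f \<Longrightarrow> hom l n (\<lambda>ks. f ks * p)"
proof -
  assume "hom l n f"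
  then obtain F c where F: "finite F" "F \<subseteq> Comp l n" "\<forall>ks. length ks = l \<longrightarrow> f ks = polyf c F ks"
    unfolding hom_def by blast
  thus ?thesis unfolding hom_def
    by (intro exI[of _ F] exI[of _ "\<lambda>is. c is * p"]) (auto simp: polyf_def sum_distrib_right mult.assoc)
qed

lemma hom_uminus: "hom l n f \<Longrightarrow> hom l n (\<lambda>ks. - f ks)"
proof -
  assume "hom l n f"
  hence "hom l n (\<lambda>ks. f ks * -1)" by (rule hom_scal)
  thus ?thesis by simp
qed

lemma hom_diff: "hom l n f \<Longrightarrow> hom l n q \<Longrightarrow> hom l n (\<lambda>ks. f ks - q ks)"
proof -
  assume "hom l n f" "hom l n q"
  hence "hom l n (\<lambda>ks. f ks + - q ks)" by (intro hom_add hom_uminus)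
  thus ?thesis by simp
qed

lemma hom_sum: "finite A \<Longrightarrow> (\<And>x. x \<in> A \<Longrightarrow> hom l n (f x)) \<Longrightarrow> hom l n (\<lambda>ks. \<Sum>x\<in>A. f x ks)"
  by (induction A rule: finite_induct) (auto intro: hom_zero hom_add)

lemma mon_replicate0: "length ks \<le> m \<Longrightarrow> mon ks (replicate m 0) = 1"
  unfolding mon_def by (auto intro!: prod.neutral simp: nth_replicate)

lemma hom_one: "hom l 0 (\<lambda>_. 1)"
  unfolding hom_def polyf_def
  by (intro exI[of _ "{replicate l 0}"] exI[of _ "\<lambda>_. 1"]) (auto simp: Comp_def mon_replicate0)

definition addl :: "nat list \<Rightarrow> nat list \<Rightarrow> nat list" where
  "addl is js = map (\<lambda>j. is!j + js!j) [0..<length is]"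

lemma mon_addl: "length is = length ks \<Longrightarrow> mon ks (addl is js) = mon ks is * mon ks js"
  unfolding mon_def addl_def by (simp add: power_add prod.distrib)

lemma sum_list_addl: "length is = length js \<Longrightarrow> sum_list (addl is js) = sum_list is + sum_list js"
  unfolding addl_def by (simp add: sum_list_sum_nth sum.distrib)

lemma hom_mult: "hom l n f \<Longrightarrow> hom l m q \<Longrightarrow> hom l (n + m) (\<lambda>ks. f ks * q ks)"
proof -
  assume "hom l n f" "hom l m q"
  then obtain F c G d where F: "finite F" "F \<subseteq> Comp l n" "\<forall>ks. length ks = l \<longrightarrow> f ks = polyf c F ks"
    and G: "finite G" "G \<subseteq> Comp l m" "\<forall>ks. length ks = l \<longrightarrow> q ks = polyf d G ks"
    unfolding hom_def by blast
  show ?thesis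
  proof (rule hom_norm[where I="F \<times> G" and ex="\<lambda>(is,js). addl is js" and a="\<lambda>(is,js). c is * d js"])
    show "finite (F \<times> G)" using F G by simp
    show "(\<lambda>(is,js). addl is js) ` (F \<times> G) \<subseteq> Comp l (n + m)"
    proof clarify
      fix a b assume "a \<in> F" "b \<in> G"
      hence "length a = l" "length b = l" "sum_list a = n" "sum_list b = m" using F(2) G(2) by (auto simp: Comp_def)
      thus "addl a b \<in> Comp l (n + m)" by (simp add: Comp_def sum_list_addl) (simp add: addl_def)
    qed
    show "\<forall>ks. length ks = l \<longrightarrow> f ks * q ks = (\<Sum>i\<in>F \<times> G. const (mon ks ((\<lambda>(is,js). addl is js) i)) * (\<lambda>(is,js). c is * d js) i)"
    proof (intro allI impI)
      fix ks :: "complex list" assume l: "length ks = l"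
      have "f ks * q ks = (\<Sum>is\<in>F. \<Sum>js\<in>G. const (mon ks is) * c is * (const (mon ks js) * d js))"
        using F(3) G(3) l by (simp add: polyf_def sum_product)
      also have "\<dots> = (\<Sum>(is,js)\<in>F \<times> G. const (mon ks is) * c is * (const (mon ks js) * d js))"
        by (simp add: sum.cartesian_product)
      also have "\<dots> = (\<Sum>i\<in>F \<times> G. const (mon ks ((\<lambda>(is,js). addl is js) i)) * (\<lambda>(is,js). c is * d js) i)"
        using F(2) l by (intro sum.cong refl) (auto simp: Comp_def mon_addl const_mult mult_ac)
      finally show "f ks * q ks = (\<Sum>i\<in>F \<times> G. const (mon ks ((\<lambda>(is,js). addl is js) i)) * (\<lambda>(is,js). c is * d js) i)" .
    qed
  qed
qed

lemma hom_power: "hom l n f \<Longrightarrow> hom l (n * k) (\<lambda>ks. f ks ^ k)"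
proof (induction k)
  case 0 then show ?case using hom_one by simp
next
  case (Suc k)
  then show ?case using hom_mult[OF Suc.prems Suc.IH[OF Suc.prems]] by (simp add: add.commute)
qed

lemma hom_prod: "finite A \<Longrightarrow> (\<And>x. x \<in> A \<Longrightarrow> hom l (n x) (f x)) \<Longrightarrow> hom l (\<Sum>x\<in>A. n x) (\<lambda>ks. \<Prod>x\<in>A. f x ks)"
  by (induction A rule: finite_induct) (auto intro: hom_one hom_mult)

lemma hom_esym: "hom l m (\<lambda>ks. const (esym m ks))"
proof (rule hom_norm[where I="{S. S \<subseteq> {..<l} \<and> card S = m}" and ex="\<lambda>S. map (\<lambda>k. if k \<in> S then 1 else 0) [0..<l]" and a="\<lambda>_. 1"])
  show "finite {S. S \<subseteq> {..<l} \<and> card S = m}" by simp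
  show "(\<lambda>S. map (\<lambda>k. if k \<in> S then 1 else 0) [0..<l]) ` {S. S \<subseteq> {..<l} \<and> card S = m} \<subseteq> Comp l m"
  proof safe
    fix S assume S: "S \<subseteq> {..<l}" "m = card S"
    have "sum_list (map (\<lambda>k. if k \<in> S then 1 else 0) [0..<l]) = (\<Sum>k<l. if k \<in> S then 1 else (0::nat))"
      by (simp add: sum_list_sum_nth atLeast0LessThan)
    also have "\<dots> = card S" using S by (simp add: sum.If_cases Int_absorb1)
    finally show "map (\<lambda>k. if k \<in> S then 1 else 0) [0..<l] \<in> Comp l (card S)" by (simp add: Comp_def)
  qed
  show "\<forall>ks. length ks = l \<longrightarrow> const (esym m ks) = (\<Sum>i\<in>{S. S \<subseteq> {..<l} \<and> card S = m}. const (mon ks (map (\<lambda>k. if k \<in> i then 1 else 0) [0..<l])) * 1)"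
  proof (intro allI impI)
    fix ks :: "complex list" assume l: "length ks = l"
    have "mon ks (map (\<lambda>k. if k \<in> S then 1 else 0) [0..<l]) = (\<Prod>s\<in>S. ks ! s)" if "S \<subseteq> {..<l}" for S
    proof -
      have "mon ks (map (\<lambda>k. if k \<in> S then 1 else 0) [0..<l]) = (\<Prod>k<l. if k \<in> S then ks!k else 1)"
        unfolding mon_def l by (intro prod.cong) auto
      also have "\<dots> = (\<Prod>s\<in>S. ks ! s)" using that by (simp add: prod.If_cases Int_absorb1)
      finally show ?thesis .
    qed
    thus "const (esym m ks) = (\<Sum>i\<in>{S. S \<subseteq> {..<l} \<and> card S = m}. const (mon ks (map (\<lambda>k. if k \<in> i then 1 else 0) [0..<l])) * 1)"
      unfolding esym_def l const_sum by (auto intro!: sum.cong)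
  qed
qed

definition wsum :: "nat list \<Rightarrow> nat" where
  "wsum \<beta> = (\<Sum>j<length \<beta>. (j + 1) * \<beta> ! j)"

lemma hom_ebeta: "hom l (wsum \<beta>) (\<lambda>ks. const (ebeta \<beta> ks))"
proof -
  have "hom l (\<Sum>j<length \<beta>. (j + 1) * \<beta> ! j) (\<lambda>ks. \<Prod>j<length \<beta>. const (esym (j+1) ks) ^ (\<beta> ! j))"
  proof (rule hom_prod)
    fix j show "hom l ((j + 1) * \<beta> ! j) (\<lambda>ks. const (esym (j+1) ks) ^ (\<beta> ! j))"
      by (rule hom_power[OF hom_esym])
  qed simp
  thus ?thesis unfolding wsum_def ebeta_def const_prod const_power .
qed


definition tr :: "nat \<Rightarrow> nat \<Rightarrow> nat \<Rightarrow> nat" where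
  "tr i j k = (if k = i then j else if k = j then i else k)"

lemma tr_tr[simp]: "tr i j (tr i j k) = k" unfolding tr_def by auto
lemma inj_tr: "inj (tr i j)" by (metis injI tr_tr)
lemma tr_img_img[simp]: "tr i j ` tr i j ` S = S" by (simp add: image_image)
lemma tr_lt: "i < l \<Longrightarrow> j < l \<Longrightarrow> k < l \<Longrightarrow> tr i j k < l" unfolding tr_def by auto

definition swapl :: "nat \<Rightarrow> nat \<Rightarrow> 'a list \<Rightarrow> 'a list" where
  "swapl i j xs = map (\<lambda>k. xs ! tr i j k) [0..<length xs]"

lemma length_swapl[simp]: "length (swapl i j xs) = length xs" unfolding swapl_def by simp
lemma nth_swapl: "k < length xs \<Longrightarrow> swapl i j xs ! k = xs ! tr i j k" unfolding swapl_def by simp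

lemma prod_tr:
  assumes "i < l" "j < l"
  shows "(\<Prod>k<l. h (tr i j k)) = (\<Prod>k<l. (h k :: 'b :: comm_monoid_mult))"
  by (rule prod.reindex_bij_witness[where i="tr i j" and j="tr i j"]) (use assms in \<open>auto intro: tr_lt\<close>)

lemma sum_tr:
  assumes "i < l" "j < l"
  shows "(\<Sum>k<l. h (tr i j k)) = (\<Sum>k<l. (h k :: 'b :: comm_monoid_add))"
  by (rule sum.reindex_bij_witness[where i="tr i j" and j="tr i j"]) (use assms in \<open>auto intro: tr_lt\<close>)

lemma mon_swap:
  assumes "length ks = l" "length is = l" "i < l" "j < l"
  shows "mon (swapl i j ks) is = mon ks (swapl i j is)"
proof -
  have "mon (swapl i j ks) is = (\<Prod>k<l. ks ! tr i j k ^ is ! k)"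
    unfolding mon_def using assms by (auto simp: nth_swapl intro!: prod.cong)
  also have "\<dots> = (\<Prod>k<l. ks ! tr i j (tr i j k) ^ is ! tr i j k)"
    using prod_tr[OF assms(3,4), of "\<lambda>k. ks ! tr i j k ^ is ! k"] by simp
  also have "\<dots> = mon ks (swapl i j is)"
    unfolding mon_def using assms by (auto simp: nth_swapl intro!: prod.cong)
  finally show ?thesis .
qed

lemma sum_list_swapl:
  assumes "i < length xs" "j < length xs"
  shows "sum_list (swapl i j xs) = sum_list (xs :: nat list)"
proof -
  have "sum_list (swapl i j xs) = (\<Sum>k<length xs. xs ! tr i j k)"
    by (simp add: sum_list_sum_nth atLeast0LessThan nth_swapl)
  also have "\<dots> = sum_list xs" using sum_tr[OF assms, of "\<lambda>k. xs ! k"]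
    by (simp add: sum_list_sum_nth atLeast0LessThan)
  finally show ?thesis .
qed

lemma hom_swap:
  assumes "hom l n f" "i < l" "j < l"
  shows "hom l n (\<lambda>ks. f (swapl i j ks))"
proof -
  obtain F c where F: "finite F" "F \<subseteq> Comp l n" "\<forall>ks. length ks = l \<longrightarrow> f ks = polyf c F ks"
    using assms unfolding hom_def by blast
  show ?thesis
  proof (rule hom_norm[where I=F and ex="swapl i j" and a=c])
    show "finite F" by fact
    show "swapl i j ` F \<subseteq> Comp l n" using F(2) assms(2,3) by (auto simp: Comp_def sum_list_swapl)
    show "\<forall>ks. length ks = l \<longrightarrow> f (swapl i j ks) = (\<Sum>is\<in>F. const (mon ks (swapl i j is)) * c is)"
      using F(2,3) assms(2,3) by (auto simp: polyf_def Comp_def mon_swap intro!: sum.cong)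
  qed
qed

definition symf :: "nat \<Rightarrow> (complex list \<Rightarrow> poly_A) \<Rightarrow> bool" where
  "symf l f \<longleftrightarrow> (\<forall>ks i j. length ks = l \<longrightarrow> i < l \<longrightarrow> j < l \<longrightarrow> f (swapl i j ks) = f ks)"

lemma esym_swap:
  assumes "length ks = l" "i < l" "j < l"
  shows "esym m (swapl i j ks) = esym m ks"
proof -
  let ?I = "{S. S \<subseteq> {..<l} \<and> card S = m}"
  have "esym m (swapl i j ks) = (\<Sum>S\<in>?I. \<Prod>s\<in>S. ks ! tr i j s)"
    unfolding esym_def using assms by (auto simp: nth_swapl intro!: sum.cong prod.cong)
  also have "\<dots> = (\<Sum>S\<in>?I. \<Prod>s\<in>tr i j ` S. ks ! s)"
  proof (intro sum.cong refl)
    fix S have "inj_on (tr i j) S" by (metis inj_on_inverseI tr_tr)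
    thus "(\<Prod>s\<in>S. ks ! tr i j s) = (\<Prod>s\<in>tr i j ` S. ks ! s)" by (simp add: prod.reindex)
  qed
  also have "\<dots> = (\<Sum>S\<in>?I. \<Prod>s\<in>S. ks ! s)"
  proof (rule sum.reindex_bij_witness[where i="\<lambda>S. tr i j ` S" and j="\<lambda>S. tr i j ` S"])
    fix S assume "S \<in> ?I"
    show "tr i j ` tr i j ` S = S" by simp
    have inj: "inj_on (tr i j) S" using inj_tr by (rule inj_on_subset) simp
    show "tr i j ` S \<in> ?I" using \<open>S \<in> ?I\<close> assms(2,3) by (auto simp: card_image[OF inj] intro: tr_lt)
  next
    fix S assume "S \<in> ?I"
    show "tr i j ` tr i j ` S = S" by simp
    have inj: "inj_on (tr i j) S" using inj_tr by (rule inj_on_subset) simp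
    show "tr i j ` S \<in> ?I" using \<open>S \<in> ?I\<close> assms(2,3) by (auto simp: card_image[OF inj] intro: tr_lt)
  qed simp
  finally show ?thesis unfolding esym_def using assms(1) by simp
qed

lemma ebeta_swap:
  assumes "length ks = l" "i < l" "j < l"
  shows "ebeta \<beta> (swapl i j ks) = ebeta \<beta> ks"
  unfolding ebeta_def using esym_swap[OF assms] by simp

lemma esym_snoc0:
  assumes "length ks = l"
  shows "esym m (ks @ [0]) = esym m ks"
proof -
  have "esym m (ks @ [0]) = (\<Sum>S\<in>{S. S \<subseteq> {..<Suc l} \<and> card S = m}. \<Prod>s\<in>S. (ks @ [0]) ! s)"
    unfolding esym_def using assms by simp
  also have "\<dots> = (\<Sum>S\<in>{S. S \<subseteq> {..<l} \<and> card S = m}. \<Prod>s\<in>S. (ks @ [0]) ! s)"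
  proof (rule sum.mono_neutral_right)
    show "finite {S. S \<subseteq> {..<Suc l} \<and> card S = m}" by simp
    show "{S. S \<subseteq> {..<l} \<and> card S = m} \<subseteq> {S. S \<subseteq> {..<Suc l} \<and> card S = m}" by auto
    show "\<forall>S\<in>{S. S \<subseteq> {..<Suc l} \<and> card S = m} - {S. S \<subseteq> {..<l} \<and> card S = m}. (\<Prod>s\<in>S. (ks @ [0]) ! s) = 0"
    proof
      fix S assume S: "S \<in> {S. S \<subseteq> {..<Suc l} \<and> card S = m} - {S. S \<subseteq> {..<l} \<and> card S = m}"
      hence "l \<in> S" by (auto simp: less_Suc_eq)
      moreover have "finite S" using S finite_subset by auto
      ultimately show "(\<Prod>s\<in>S. (ks @ [0]) ! s) = 0" using assms
        by (intro prod_zero) (auto intro!: bexI[of _ l])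
    qed
  qed
  also have "\<dots> = esym m ks"
    unfolding esym_def using assms by (auto simp: nth_append intro!: sum.cong prod.cong)
  finally show ?thesis .
qed

lemma esym_top:
  assumes "length ks = l"
  shows "esym l ks = (\<Prod>j<l. ks ! j)"
proof -
  have "{S. S \<subseteq> {..<l} \<and> card S = l} = {{..<l}}"
  proof (intro equalityI subsetI)
    fix S assume "S \<in> {S. S \<subseteq> {..<l} \<and> card S = l}"
    thus "S \<in> {{..<l}}" by (metis (mono_tags, lifting) card_lessThan card_subset_eq finite_lessThan mem_Collect_eq singletonI)
  qed auto
  thus ?thesis unfolding esym_def using assms by simp
qed

lemma esym_one:
  assumes "length ks = l"
  shows "esym 1 ks = (\<Sum>j<l. ks ! j)"
proof -
  have "{S. S \<subseteq> {..<l} \<and> card S = 1} = (\<lambda>j. {j}) ` {..<l}"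
    by (auto simp: card_1_singleton_iff)
  hence "esym 1 ks = (\<Sum>S\<in>(\<lambda>j. {j}) ` {..<l}. \<Prod>s\<in>S. ks ! s)"
    unfolding esym_def using assms by simp
  also have "\<dots> = (\<Sum>j<l. ks ! j)" by (subst sum.reindex) (auto simp: inj_on_def)
  finally show ?thesis .
qed

lemma symf_polyf:
  assumes "\<And>is i j. is \<in> F \<Longrightarrow> i < l \<Longrightarrow> j < l \<Longrightarrow> swapl i j is \<in> F \<and> c (swapl i j is) = c is"
    "\<forall>is\<in>F. length is = l"
  shows "symf l (polyf c F)"
  unfolding symf_def
proof (intro allI impI)
  fix ks :: "complex list" and i j assume a: "length ks = l" "i < l" "j < l"
  have "polyf c F (swapl i j ks) = (\<Sum>is\<in>F. const (mon ks (swapl i j is)) * c (swapl i j is))"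
    unfolding polyf_def using assms a by (auto simp: mon_swap intro!: sum.cong)
  also have "\<dots> = polyf c F ks" unfolding polyf_def
    by (rule sum.reindex_bij_witness[where i="swapl i j" and j="swapl i j"])
       (use assms a in \<open>auto simp: swapl_def tr_lt intro!: nth_equalityI\<close>)
  finally show "polyf c F (swapl i j ks) = polyf c F ks" .
qed


lemma mon_snoc:
  assumes "length ks = length xs"
  shows "mon (ks @ [z]) (xs @ [a]) = mon ks xs * z ^ a"
proof -
  have "mon (ks @ [z]) (xs @ [a]) = (\<Prod>j<Suc (length ks). (ks @ [z]) ! j ^ (xs @ [a]) ! j)"
    unfolding mon_def by simp
  also have "\<dots> = (\<Prod>j<length ks. (ks @ [z]) ! j ^ (xs @ [a]) ! j) * z ^ a"
  proof -
    have "(ks @ [z]) ! length ks = z" by simp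
    moreover have "(xs @ [a]) ! length ks = a" using assms by (simp add: nth_append)
    ultimately show ?thesis by (simp only: prod.lessThan_Suc)
  qed
  also have "(\<Prod>j<length ks. (ks @ [z]) ! j ^ (xs @ [a]) ! j) = mon ks xs"
    unfolding mon_def using assms by (intro prod.cong refl) (simp add: nth_append)
  finally show ?thesis .
qed

lemma wsum_snoc: "wsum (xs @ [a]) = wsum xs + Suc (length xs) * a"
proof -
  have "wsum (xs @ [a]) = (\<Sum>j<Suc (length xs). (j + 1) * (xs @ [a]) ! j)"
    unfolding wsum_def by simp
  also have "\<dots> = (\<Sum>j<length xs. (j + 1) * (xs @ [a]) ! j) + Suc (length xs) * a"
    by (simp only: sum.lessThan_Suc) simp
  also have "(\<Sum>j<length xs. (j + 1) * (xs @ [a]) ! j) = wsum xs"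
    unfolding wsum_def by (intro sum.cong refl) (simp add: nth_append)
  finally show ?thesis .
qed

lemma ebeta_snoc: "ebeta (xs @ [a]) ks = ebeta xs ks * esym (Suc (length xs)) ks ^ a"
proof -
  have "ebeta (xs @ [a]) ks = (\<Prod>j<Suc (length xs). esym (j + 1) ks ^ (xs @ [a]) ! j)"
    unfolding ebeta_def by simp
  also have "\<dots> = (\<Prod>j<length xs. esym (j + 1) ks ^ (xs @ [a]) ! j) * esym (Suc (length xs)) ks ^ a"
    by (simp only: prod.lessThan_Suc) simp
  also have "(\<Prod>j<length xs. esym (j + 1) ks ^ (xs @ [a]) ! j) = ebeta xs ks"
    unfolding ebeta_def by (intro prod.cong refl) (simp add: nth_append)
  finally show ?thesis .
qed

lemma esym_big: "length ks < m \<Longrightarrow> esym m ks = 0"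
proof -
  assume a: "length ks < m"
  have eq: "{S. S \<subseteq> {..<length ks} \<and> card S = m} = {}"
  proof safe
    fix S assume "S \<subseteq> {..<length ks}" "m = card S"
    hence "card S \<le> length ks" using card_mono[of "{..<length ks}" S] by simp
    with a \<open>m = card S\<close> show "S \<in> {}" by simp
  qed
  show ?thesis unfolding esym_def eq by simp
qed

lemma ebeta_snoc0ks: "length ks = l \<Longrightarrow> ebeta \<beta> (ks @ [0]) = ebeta \<beta> ks"
  unfolding ebeta_def using esym_snoc0 by simp

definition W :: "nat \<Rightarrow> nat \<Rightarrow> nat list set" where
  "W n l = {\<beta>. length \<beta> = l \<and> wsum \<beta> = n}"

lemma finite_W: "finite (W n l)"
proof -
  have "W n l \<subseteq> {xs. set xs \<subseteq> {0..n} \<and> length xs = l}"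
  proof safe
    fix \<beta> x assume b: "\<beta> \<in> W n l" "x \<in> set \<beta>"
    then obtain j where j: "j < length \<beta>" "x = \<beta> ! j" by (auto simp: in_set_conv_nth)
    have "x \<le> (j+1) * \<beta> ! j" using j by simp
    also have "\<dots> \<le> wsum \<beta>" unfolding wsum_def
      by (rule member_le_sum[where f="\<lambda>j. (j+1) * \<beta> ! j"]) (use j in auto)
    finally show "x \<in> {0..n}" using b by (simp add: W_def)
  qed (simp add: W_def)
  thus ?thesis using finite_lists_length_eq[of "{0..n}" l] finite_subset by blast
qed

definition incl :: "nat list \<Rightarrow> nat list" where
  "incl \<beta> = butlast \<beta> @ [last \<beta> + 1]"

lemma W_cases:
  assumes "\<beta> \<in> W n (Suc l)"
  obtains (zero) \<beta>' where "\<beta>' \<in> W n l" "\<beta> = \<beta>' @ [0]"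
    | (pos) \<gamma> where "Suc l \<le> n" "\<gamma> \<in> W (n - Suc l) (Suc l)" "\<beta> = incl \<gamma>"
proof -
  have "\<beta> \<noteq> []" using assms by (auto simp: W_def)
  then obtain xs a where xa: "\<beta> = xs @ [a]" by (cases \<beta> rule: rev_exhaust) auto
  have lx: "length xs = l" and ws: "wsum xs + Suc l * a = n"
    using assms by (auto simp: W_def xa wsum_snoc)
  show ?thesis
  proof (cases a)
    case 0 then show ?thesis using zero[of xs] lx ws xa by (simp add: W_def)
  next
    case (Suc b)
    have "Suc l \<le> n" using ws Suc by simp
    moreover have "xs @ [b] \<in> W (n - Suc l) (Suc l)" using ws lx Suc by (simp add: W_def wsum_snoc)
    moreover have "\<beta> = incl (xs @ [b])" by (simp add: incl_def xa Suc)
    ultimately show ?thesis by (rule pos)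
  qed
qed

lemma incl_W: "Suc l \<le> n \<Longrightarrow> \<gamma> \<in> W (n - Suc l) (Suc l) \<Longrightarrow> incl \<gamma> \<in> W n (Suc l)"
proof -
  assume a: "Suc l \<le> n" "\<gamma> \<in> W (n - Suc l) (Suc l)"
  hence "\<gamma> \<noteq> []" by (auto simp: W_def)
  then obtain xs b where xb: "\<gamma> = xs @ [b]" by (cases \<gamma> rule: rev_exhaust) auto
  show ?thesis using a by (auto simp: W_def xb incl_def wsum_snoc)
qed

lemma snoc0_W: "\<beta>' \<in> W n l \<Longrightarrow> \<beta>' @ [0] \<in> W n (Suc l)"
  by (simp add: W_def wsum_snoc)

lemma W_split:
  "(\<Sum>\<beta>\<in>W n (Suc l). T \<beta>) = (\<Sum>\<beta>'\<in>W n l. T (\<beta>' @ [0])) +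
     (if Suc l \<le> n then (\<Sum>\<gamma>\<in>W (n - Suc l) (Suc l). T (incl \<gamma>)) else 0)"
proof -
  let ?A = "(\<lambda>\<beta>'. \<beta>' @ [0]) ` W n l"
  let ?B = "(if Suc l \<le> n then incl ` W (n - Suc l) (Suc l) else {})"
  have eq: "W n (Suc l) = ?A \<union> ?B"
  proof (intro equalityI subsetI)
    fix \<beta> assume "\<beta> \<in> W n (Suc l)"
    thus "\<beta> \<in> ?A \<union> ?B" by (cases rule: W_cases) auto
  qed (auto split: if_splits intro: incl_W snoc0_W)
  have disj: "?A \<inter> ?B = {}" by (auto simp: incl_def split: if_splits)
  have inj1: "inj_on (\<lambda>\<beta>'. \<beta>' @ [0]) (W n l)" by (auto simp: inj_on_def)
  have inj2: "inj_on incl (W (n - Suc l) (Suc l))"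
  proof (rule inj_onI)
    fix x y assume "x \<in> W (n - Suc l) (Suc l)" "y \<in> W (n - Suc l) (Suc l)" "incl x = incl y"
    hence ne: "x \<noteq> []" "y \<noteq> []" by (auto simp: W_def)
    have "butlast x = butlast y" "last x = last y" using \<open>incl x = incl y\<close> by (auto simp: incl_def)
    thus "x = y" using append_butlast_last_id[OF ne(1)] append_butlast_last_id[OF ne(2)] by metis
  qed
  have "(\<Sum>\<beta>\<in>W n (Suc l). T \<beta>) = sum T ?A + sum T ?B"
    unfolding eq by (rule sum.union_disjoint) (use finite_W disj in auto)
  also have "sum T ?A = (\<Sum>\<beta>'\<in>W n l. T (\<beta>' @ [0]))" using inj1 by (simp add: sum.reindex)
  also have "sum T ?B = (if Suc l \<le> n then (\<Sum>\<gamma>\<in>W (n - Suc l) (Suc l). T (incl \<gamma>)) else 0)"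
    using inj2 by (simp add: sum.reindex)
  finally show ?thesis .
qed

lemma ebeta_incl: "\<gamma> \<noteq> [] \<Longrightarrow> ebeta (incl \<gamma>) ks = ebeta \<gamma> ks * esym (length \<gamma>) ks"
proof -
  assume "\<gamma> \<noteq> []"
  then obtain xs b where xb: "\<gamma> = xs @ [b]" by (cases \<gamma> rule: rev_exhaust) auto
  show ?thesis by (simp add: xb incl_def ebeta_snoc)
qed

lemma mon_Suc:
  assumes "length is = length ks"
  shows "mon ks (map Suc is) = esym (length ks) ks * mon ks is"
  unfolding mon_def esym_top[OF refl] using assms by (simp add: prod.distrib)

lemma sum_list_map_Suc: "sum_list (map Suc xs) = sum_list xs + length xs"
  by (induction xs) auto

lemma cancel:
  assumes "hom l m q" "\<forall>ks. length ks = l \<longrightarrow> const (esym l ks) * q ks = 0" "length ks = l"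
  shows "q ks = 0"
proof -
  obtain c where c: "\<forall>ks. length ks = l \<longrightarrow> q ks = polyf c (Comp l m) ks" using hom_canon[OF assms(1)] by blast
  define c' where "c' js = c (map (\<lambda>x. x - 1) js)" for js
  have inj: "inj_on (map Suc) (Comp l m)" by (auto simp: inj_on_def)
  have zero: "polyf c' (map Suc ` Comp l m) ks = 0" if "length ks = l" for ks
  proof -
    have "polyf c' (map Suc ` Comp l m) ks = (\<Sum>is\<in>Comp l m. const (mon ks (map Suc is)) * c is)"
      unfolding polyf_def using inj by (simp add: sum.reindex c'_def comp_def)
    also have "\<dots> = const (esym l ks) * q ks"
      using c that by (auto simp: polyf_def sum_distrib_left mon_Suc Comp_def const_mult mult.assoc intro!: sum.cong)
    finally show ?thesis using assms(2) that by simp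
  qed
  have "c is = 0" if "is \<in> Comp l m" for "is"
  proof -
    have "c' (map Suc is) = 0"
      by (rule idt[where F="map Suc ` Comp l m" and l=l]) (use zero that finite_Comp in \<open>auto simp: Comp_def\<close>)
    thus ?thesis by (simp add: c'_def comp_def)
  qed
  thus ?thesis using c assms(3) by (simp add: polyf_def)
qed

lemma pos_char: "(\<forall>j<length is. is ! j \<noteq> 0) \<Longrightarrow> map Suc (map (\<lambda>x. x - 1) is) = is"
  by (rule nth_equalityI) auto

lemma mon_upd0:
  assumes "length ks = length is" "j < length is"
  shows "mon (ks[j := 0]) is = (if is ! j = 0 then mon ks is else 0)"
proof (cases "is ! j = 0")
  case True
  then show ?thesis unfolding mon_def using assms
    by (auto intro!: prod.cong simp: nth_list_update)
next
  case False
  have "mon (ks[j := 0]) is = 0" unfolding mon_def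
    by (rule prod_zero) (use assms False in \<open>auto intro!: bexI[of _ j]\<close>)
  then show ?thesis using False by simp
qed

lemma swap_last0:
  assumes "symf (Suc l) h" "\<forall>k'. length k' = l \<longrightarrow> h (k' @ [0]) = 0" "length ks = Suc l" "j < Suc l"
  shows "h (ks[j := 0]) = 0"
proof -
  let ?k0 = "ks[j := 0]"
  let ?s = "swapl j l ?k0"
  have ls: "length ?s = Suc l" using assms(3) by simp
  have "?s ! l = ?k0 ! j" using assms(3,4) by (simp add: nth_swapl tr_def)
  hence sl: "?s ! l = 0" using assms(3,4) by simp
  have ne: "?s \<noteq> []" using ls by (metis list.size(3) nat.distinct(1))
  have "last ?s = ?s ! (length ?s - 1)" using ne by (rule last_conv_nth)
  hence "last ?s = 0" using sl ls by simp
  hence "?s = butlast ?s @ [0]" using append_butlast_last_id[OF ne] by simp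
  moreover have "length (butlast ?s) = l" using ls by simp
  ultimately have "h ?s = 0" using assms(2) by metis
  moreover have "h ?s = h ?k0" using assms(1,3,4) unfolding symf_def by simp
  ultimately show ?thesis by simp
qed

lemma vanish:
  assumes "hom (Suc l) n h" "symf (Suc l) h" "\<forall>k'. length k' = l \<longrightarrow> h (k' @ [0]) = 0"
  shows "\<exists>h'. hom (Suc l) (n - Suc l) h' \<and> (\<forall>ks. length ks = Suc l \<longrightarrow> h ks = const (esym (Suc l) ks) * h' ks)
      \<and> (n < Suc l \<longrightarrow> (\<forall>ks. length ks = Suc l \<longrightarrow> h ks = 0))"
proof -
  obtain c where c: "\<forall>ks. length ks = Suc l \<longrightarrow> h ks = polyf c (Comp (Suc l) n) ks"
    using hom_canon[OF assms(1)] by blast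
  have Z: "c is = 0" if isp: "is \<in> Comp (Suc l) n" "j < Suc l" "is ! j = 0" for "is" j
  proof -
    let ?J = "{is\<in>Comp (Suc l) n. is ! j = 0}"
    have polyJ: "\<forall>ks. length ks = Suc l \<longrightarrow> polyf c ?J ks = 0"
    proof (intro allI impI)
      fix ks :: "complex list" assume len: "length ks = Suc l"
      have "h (ks[j := 0]) = polyf c (Comp (Suc l) n) (ks[j := 0])" using c len by simp
      also have "\<dots> = (\<Sum>is\<in>Comp (Suc l) n. if is ! j = 0 then const (mon ks is) * c is else 0)"
        unfolding polyf_def using len isp(2) by (intro sum.cong refl) (auto simp: mon_upd0 Comp_def)
      also have "\<dots> = polyf c ?J ks" unfolding polyf_def using finite_Comp by (simp add: sum.inter_filter)
      finally show "polyf c ?J ks = 0" using swap_last0[OF assms(2,3) len isp(2)] by simp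
    qed
    have finJ: "finite ?J" by (rule finite_subset[OF _ finite_Comp]) auto
    have lenJ: "\<forall>is\<in>?J. length is = Suc l" by (auto simp: Comp_def)
    have memJ: "is \<in> ?J" using isp by simp
    show ?thesis using finJ lenJ polyJ memJ by (rule idt)
  qed
  let ?Pos = "{is\<in>Comp (Suc l) n. \<forall>j<Suc l. is ! j \<noteq> 0}"
  have hPos: "h ks = polyf c ?Pos ks" if "length ks = Suc l" for ks
  proof -
    have "h ks = polyf c (Comp (Suc l) n) ks" using c that by simp
    also have "\<dots> = polyf c ?Pos ks" unfolding polyf_def
      by (rule sum.mono_neutral_right) (use finite_Comp Z in auto)
    finally show ?thesis .
  qed
  show ?thesis
  proof (cases "Suc l \<le> n")
    case True
    define h' where "h' = polyf (\<lambda>is. c (map Suc is)) (Comp (Suc l) (n - Suc l))"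
    have hom': "hom (Suc l) (n - Suc l) h'" unfolding hom_def h'_def using finite_Comp by blast
    have Pos: "?Pos = map Suc ` Comp (Suc l) (n - Suc l)"
    proof (intro equalityI subsetI)
      fix x assume x: "x \<in> ?Pos"
      define y where "y = map (\<lambda>x. x - 1) x"
      have "map Suc y = x" unfolding y_def by (rule pos_char) (use x in \<open>auto simp: Comp_def\<close>)
      hence xy: "x = map Suc y" by simp
      have "y \<in> Comp (Suc l) (n - Suc l)"
        using x sum_list_map_Suc[of y] unfolding xy by (auto simp: Comp_def)
      thus "x \<in> map Suc ` Comp (Suc l) (n - Suc l)" using xy by blast
    next
      fix x assume "x \<in> map Suc ` Comp (Suc l) (n - Suc l)"
      then obtain y where "y \<in> Comp (Suc l) (n - Suc l)" "x = map Suc y" by blast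
      thus "x \<in> ?Pos" using True by (auto simp: Comp_def sum_list_map_Suc)
    qed
    have inj: "inj_on (map Suc) (Comp (Suc l) (n - Suc l))" by (auto simp: inj_on_def)
    have "h ks = const (esym (Suc l) ks) * h' ks" if len: "length ks = Suc l" for ks
    proof -
      have "h ks = polyf c (map Suc ` Comp (Suc l) (n - Suc l)) ks" using hPos[OF len] Pos by simp
      also have "\<dots> = (\<Sum>is\<in>Comp (Suc l) (n - Suc l). const (mon ks (map Suc is)) * c (map Suc is))"
        unfolding polyf_def using inj by (simp add: sum.reindex)
      also have "\<dots> = const (esym (Suc l) ks) * h' ks"
        unfolding h'_def polyf_def sum_distrib_left using len
        by (intro sum.cong refl) (auto simp: Comp_def mon_Suc const_mult mult.assoc)
      finally show ?thesis .
    qed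
    thus ?thesis using hom' True by auto
  next
    case False
    have empty: "?Pos = {}"
    proof safe
      fix x assume x: "x \<in> Comp (Suc l) n" "\<forall>j<Suc l. x ! j \<noteq> 0"
      define y where "y = map (\<lambda>x. x - 1) x"
      have "map Suc y = x" unfolding y_def by (rule pos_char) (use x in \<open>auto simp: Comp_def\<close>)
      hence xy: "x = map Suc y" by simp
      have "sum_list x \<ge> Suc l" using x sum_list_map_Suc[of y] unfolding xy by (auto simp: Comp_def)
      thus "x \<in> {}" using x False by (simp add: Comp_def)
    qed
    have "h ks = 0" if "length ks = Suc l" for ks using hPos[OF that, unfolded empty] by (simp add: polyf_def)
    thus ?thesis using False hom_zero by (intro exI[of _ "\<lambda>_. 0"]) auto
  qed
qed

lemma swapl_snoc: "i < length xs \<Longrightarrow> j < length xs \<Longrightarrow> swapl i j (xs @ [z]) = swapl i j xs @ [z]"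
  by (rule nth_equalityI) (auto simp: nth_swapl nth_append tr_def)

lemma ftsp: "hom l n f \<Longrightarrow> symf l f \<Longrightarrow> \<exists>C. \<forall>ks. length ks = l \<longrightarrow> f ks = (\<Sum>\<beta>\<in>W n l. const (ebeta \<beta> ks) * C \<beta>)"
proof (induction l arbitrary: n f)
  case 0
  show ?case
  proof (cases "n = 0")
    case True
    have "W n 0 = {[]}" using True by (auto simp: W_def wsum_def)
    thus ?thesis by (intro exI[of _ "\<lambda>_. f []"]) (auto simp: ebeta_def)
  next
    case False
    have W: "W n 0 = {}" using False by (auto simp: W_def wsum_def)
    obtain F c where F: "finite F" "F \<subseteq> Comp 0 n" "\<forall>ks. length ks = 0 \<longrightarrow> f ks = polyf c F ks"
      using "0.prems"(1) unfolding hom_def by blast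
    have "F = {}" using F(2) False by (auto simp: Comp_def)
    hence "f [] = 0" using F(3) by (simp add: polyf_def)
    thus ?thesis using W by (intro exI[of _ "\<lambda>_. 0"]) auto
  qed
next
  case (Suc l)
  from Suc.prems show ?case
  proof (induction n arbitrary: f rule: less_induct)
    case (less n)
    obtain c where c: "\<forall>ks. length ks = Suc l \<longrightarrow> f ks = polyf c (Comp (Suc l) n) ks"
      using hom_canon[OF less.prems(1)] by blast
    define g where "g k' = f (k' @ [0])" for k'
    have homg: "hom l n g" unfolding hom_def
    proof (intro exI conjI allI impI)
      show "finite (Comp l n)" by (rule finite_Comp)
      show "Comp l n \<subseteq> Comp l n" by simp
      fix k' :: "complex list" assume len: "length k' = l"
      have "g k' = (\<Sum>is\<in>Comp (Suc l) n. const (mon (k' @ [0]) is) * c is)"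
        unfolding g_def using c len by (simp add: polyf_def)
      also have "\<dots> = (\<Sum>is\<in>(\<lambda>xs. xs @ [0]) ` Comp l n. const (mon (k' @ [0]) is) * c is)"
      proof (rule sum.mono_neutral_right)
        show "finite (Comp (Suc l) n)" by (rule finite_Comp)
        show "(\<lambda>xs. xs @ [0]) ` Comp l n \<subseteq> Comp (Suc l) n" by (auto simp: Comp_def)
        show "\<forall>is\<in>Comp (Suc l) n - (\<lambda>xs. xs @ [0]) ` Comp l n. const (mon (k' @ [0]) is) * c is = 0"
        proof
          fix "is" assume isA: "is \<in> Comp (Suc l) n - (\<lambda>xs. xs @ [0]) ` Comp l n"
          hence "is \<noteq> []" by (auto simp: Comp_def)
          then obtain xs a where xa: "is = xs @ [a]" by (cases "is" rule: rev_exhaust) auto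
          have lxs: "length xs = l" using isA xa by (simp add: Comp_def)
          have "a \<noteq> 0" using isA xa lxs by (auto simp: Comp_def image_iff)
          thus "const (mon (k' @ [0]) is) * c is = 0" using lxs len by (simp add: xa mon_snoc zero_power)
        qed
      qed
      also have "\<dots> = (\<Sum>xs\<in>Comp l n. const (mon k' xs) * c (xs @ [0]))"
        by (subst sum.reindex) (auto simp: inj_on_def Comp_def mon_snoc len intro!: sum.cong)
      finally show "g k' = polyf (\<lambda>xs. c (xs @ [0])) (Comp l n) k'" by (simp add: polyf_def)
    qed
    have symg: "symf l g" unfolding symf_def
    proof (intro allI impI)
      fix k' :: "complex list" and i j assume a: "length k' = l" "i < l" "j < l"
      have "g (swapl i j k') = f (swapl i j (k' @ [0]))" unfolding g_def using a by (simp add: swapl_snoc)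
      also have "\<dots> = f (k' @ [0])" using less.prems(2) a unfolding symf_def by simp
      finally show "g (swapl i j k') = g k'" by (simp add: g_def)
    qed
    obtain C' where C': "\<forall>k'. length k' = l \<longrightarrow> g k' = (\<Sum>\<beta>'\<in>W n l. const (ebeta \<beta>' k') * C' \<beta>')"
      using Suc.IH[OF homg symg] by blast
    define q where "q ks = (\<Sum>\<beta>'\<in>W n l. const (ebeta (\<beta>' @ [0]) ks) * C' \<beta>')" for ks
    have homq: "hom (Suc l) n q" unfolding q_def
    proof (rule hom_sum[OF finite_W])
      fix \<beta>' assume "\<beta>' \<in> W n l"
      hence "wsum (\<beta>' @ [0]) = n" by (simp add: W_def wsum_snoc)
      thus "hom (Suc l) n (\<lambda>ks. const (ebeta (\<beta>' @ [0]) ks) * C' \<beta>')"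
        using hom_scal[OF hom_ebeta[of "Suc l" "\<beta>' @ [0]"]] by simp
    qed
    have symq: "symf (Suc l) q" unfolding symf_def q_def by (auto simp: ebeta_swap)
    have q0: "q (k' @ [0]) = g k'" if "length k' = l" for k'
      unfolding q_def C'[rule_format, OF that] using that by (simp add: ebeta_snoc ebeta_snoc0ks)
    define h where "h ks = f ks - q ks" for ks
    have homh: "hom (Suc l) n h" unfolding h_def by (rule hom_diff[OF less.prems(1) homq])
    have symh: "symf (Suc l) h" using less.prems(2) symq unfolding symf_def h_def by simp
    have h0: "\<forall>k'. length k' = l \<longrightarrow> h (k' @ [0]) = 0" by (simp add: h_def q0 g_def)
    obtain h' where h': "hom (Suc l) (n - Suc l) h'" "\<forall>ks. length ks = Suc l \<longrightarrow> h ks = const (esym (Suc l) ks) * h' ks"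
       "n < Suc l \<longrightarrow> (\<forall>ks. length ks = Suc l \<longrightarrow> h ks = 0)"
      using vanish[OF homh symh h0] by blast
    have symh': "symf (Suc l) h'" unfolding symf_def
    proof (intro allI impI)
      fix ks :: "complex list" and i j assume a: "length ks = Suc l" "i < Suc l" "j < Suc l"
      have "(\<lambda>ks. h' (swapl i j ks) - h' ks) ks = 0"
      proof (rule cancel[where l="Suc l"])
        show "hom (Suc l) (n - Suc l) (\<lambda>ks. h' (swapl i j ks) - h' ks)"
          by (rule hom_diff[OF hom_swap[OF h'(1) a(2,3)] h'(1)])
        show "\<forall>ks. length ks = Suc l \<longrightarrow> const (esym (Suc l) ks) * (h' (swapl i j ks) - h' ks) = 0"
        proof (intro allI impI)
          fix ks :: "complex list" assume l: "length ks = Suc l"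
          have "const (esym (Suc l) ks) * (h' (swapl i j ks) - h' ks)
              = const (esym (Suc l) (swapl i j ks)) * h' (swapl i j ks) - const (esym (Suc l) ks) * h' ks"
            using esym_swap[OF l a(2,3)] by (simp add: right_diff_distrib)
          also have "\<dots> = h (swapl i j ks) - h ks" using h'(2) l by simp
          also have "\<dots> = 0" using symh l a unfolding symf_def by simp
          finally show "const (esym (Suc l) ks) * (h' (swapl i j ks) - h' ks) = 0" .
        qed
      qed (use a in simp)
      thus "h' (swapl i j ks) = h' ks" by simp
    qed
    obtain C'' where C'': "\<forall>ks. length ks = Suc l \<longrightarrow>
        h ks = (if Suc l \<le> n then (\<Sum>\<gamma>\<in>W (n - Suc l) (Suc l). const (ebeta (incl \<gamma>) ks) * C'' \<gamma>) else 0)"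
    proof (cases "Suc l \<le> n")
      case True
      obtain C'' where C'': "\<forall>ks. length ks = Suc l \<longrightarrow> h' ks = (\<Sum>\<gamma>\<in>W (n - Suc l) (Suc l). const (ebeta \<gamma> ks) * C'' \<gamma>)"
        using less.IH[OF _ h'(1) symh'] True by force
      have "h ks = (\<Sum>\<gamma>\<in>W (n - Suc l) (Suc l). const (ebeta (incl \<gamma>) ks) * C'' \<gamma>)" if "length ks = Suc l" for ks
      proof -
        have "h ks = const (esym (Suc l) ks) * (\<Sum>\<gamma>\<in>W (n - Suc l) (Suc l). const (ebeta \<gamma> ks) * C'' \<gamma>)"
          using h'(2) C'' that by simp
        also have "\<dots> = (\<Sum>\<gamma>\<in>W (n - Suc l) (Suc l). const (ebeta (incl \<gamma>) ks) * C'' \<gamma>)"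
          unfolding sum_distrib_left
        proof (intro sum.cong refl)
          fix \<gamma> assume "\<gamma> \<in> W (n - Suc l) (Suc l)"
          hence "\<gamma> \<noteq> []" "length \<gamma> = Suc l" by (auto simp: W_def)
          thus "const (esym (Suc l) ks) * (const (ebeta \<gamma> ks) * C'' \<gamma>) = const (ebeta (incl \<gamma>) ks) * C'' \<gamma>"
            by (simp add: ebeta_incl const_mult mult_ac)
        qed
        finally show ?thesis .
      qed
      thus ?thesis using True that by auto
    next
      case False
      thus ?thesis using h'(3) that by auto
    qed
    define C where "C \<beta> = (if last \<beta> = 0 then C' (butlast \<beta>) else C'' (butlast \<beta> @ [last \<beta> - 1]))" for \<beta>
    have "f ks = (\<Sum>\<beta>\<in>W n (Suc l). const (ebeta \<beta> ks) * C \<beta>)" if len: "length ks = Suc l" for ks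
    proof -
      have "f ks = q ks + h ks" by (simp add: h_def)
      also have "\<dots> = (\<Sum>\<beta>'\<in>W n l. const (ebeta (\<beta>' @ [0]) ks) * C (\<beta>' @ [0])) +
         (if Suc l \<le> n then (\<Sum>\<gamma>\<in>W (n - Suc l) (Suc l). const (ebeta (incl \<gamma>) ks) * C (incl \<gamma>)) else 0)"
      proof -
        have "(\<Sum>\<gamma>\<in>W (n - Suc l) (Suc l). const (ebeta (incl \<gamma>) ks) * C (incl \<gamma>))
            = (\<Sum>\<gamma>\<in>W (n - Suc l) (Suc l). const (ebeta (incl \<gamma>) ks) * C'' \<gamma>)"
        proof (intro sum.cong refl)
          fix \<gamma> assume "\<gamma> \<in> W (n - Suc l) (Suc l)"
          hence "\<gamma> \<noteq> []" by (auto simp: W_def)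
          thus "const (ebeta (incl \<gamma>) ks) * C (incl \<gamma>) = const (ebeta (incl \<gamma>) ks) * C'' \<gamma>"
            by (simp add: C_def incl_def)
        qed
        thus ?thesis using C''[rule_format, OF len] by (simp add: q_def C_def)
      qed
      also have "\<dots> = (\<Sum>\<beta>\<in>W n (Suc l). const (ebeta \<beta> ks) * C \<beta>)"
        by (rule W_split[symmetric])
      finally show ?thesis .
    qed
    thus ?case by blast
  qed
qed

lemma indep: "(\<forall>ks. length ks = l \<longrightarrow> (\<Sum>\<beta>\<in>W n l. const (ebeta \<beta> ks) * D \<beta>) = 0) \<Longrightarrow> \<beta> \<in> W n l \<Longrightarrow> D \<beta> = 0"
proof (induction l arbitrary: n D \<beta>)
  case 0
  hence b: "\<beta> = []" "n = 0" by (auto simp: W_def wsum_def)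
  hence "W n 0 = {[]}" by (auto simp: W_def wsum_def)
  thus ?case using "0.prems"(1) b by (auto simp: ebeta_def)
next
  case (Suc l)
  from Suc.prems show ?case
  proof (induction n arbitrary: D \<beta> rule: less_induct)
    case (less n)
    have split: "(\<Sum>\<beta>\<in>W n (Suc l). const (ebeta \<beta> ks) * D \<beta>) =
       (\<Sum>\<beta>'\<in>W n l. const (ebeta (\<beta>' @ [0]) ks) * D (\<beta>' @ [0])) +
       (if Suc l \<le> n then (\<Sum>\<gamma>\<in>W (n - Suc l) (Suc l). const (ebeta (incl \<gamma>) ks) * D (incl \<gamma>)) else 0)" for ks
      by (rule W_split)
    have first0: "(\<Sum>\<beta>'\<in>W n l. const (ebeta \<beta>' k') * D (\<beta>' @ [0])) = 0" if len: "length k' = l" for k'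
    proof -
      have "(\<Sum>\<gamma>\<in>W (n - Suc l) (Suc l). const (ebeta (incl \<gamma>) (k' @ [0])) * D (incl \<gamma>)) = 0"
      proof (intro sum.neutral ballI)
        fix \<gamma> assume "\<gamma> \<in> W (n - Suc l) (Suc l)"
        hence "\<gamma> \<noteq> []" "length \<gamma> = Suc l" by (auto simp: W_def)
        thus "const (ebeta (incl \<gamma>) (k' @ [0])) * D (incl \<gamma>) = 0"
          using len by (simp add: ebeta_incl esym_snoc0 esym_big)
      qed
      moreover have "(\<Sum>\<beta>'\<in>W n l. const (ebeta (\<beta>' @ [0]) (k' @ [0])) * D (\<beta>' @ [0]))
          = (\<Sum>\<beta>'\<in>W n l. const (ebeta \<beta>' k') * D (\<beta>' @ [0]))"
        using len by (simp add: ebeta_snoc ebeta_snoc0ks)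
      moreover have "length (k' @ [0]) = Suc l" using len by simp
      ultimately show ?thesis using less.prems(1) split[of "k' @ [0]"] by (simp split: if_splits)
    qed
    have D0: "D (\<beta>' @ [0]) = 0" if "\<beta>' \<in> W n l" for \<beta>'
      using Suc.IH[where n=n and D="\<lambda>\<beta>'. D (\<beta>' @ [0])" and \<beta>=\<beta>'] first0 that by blast
    have Dpos: "D (incl \<gamma>) = 0" if "Suc l \<le> n" "\<gamma> \<in> W (n - Suc l) (Suc l)" for \<gamma>
    proof -
      define R where "R ks = (\<Sum>\<gamma>\<in>W (n - Suc l) (Suc l). const (ebeta \<gamma> ks) * D (incl \<gamma>))" for ks
      have homR: "hom (Suc l) (n - Suc l) R" unfolding R_def
      proof (rule hom_sum[OF finite_W])
        fix \<gamma> assume "\<gamma> \<in> W (n - Suc l) (Suc l)"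
        thus "hom (Suc l) (n - Suc l) (\<lambda>ks. const (ebeta \<gamma> ks) * D (incl \<gamma>))"
          using hom_scal[OF hom_ebeta[of "Suc l" \<gamma>]] by (simp add: W_def)
      qed
      have "R ks = 0" if "length ks = Suc l" for ks
      proof (rule cancel[OF homR _ that], intro allI impI)
        fix ks :: "complex list" assume len: "length ks = Suc l"
        have "const (esym (Suc l) ks) * R ks = (\<Sum>\<gamma>\<in>W (n - Suc l) (Suc l). const (ebeta (incl \<gamma>) ks) * D (incl \<gamma>))"
          unfolding R_def sum_distrib_left
        proof (intro sum.cong refl)
          fix \<gamma> assume "\<gamma> \<in> W (n - Suc l) (Suc l)"
          hence "\<gamma> \<noteq> []" "length \<gamma> = Suc l" by (auto simp: W_def)
          thus "const (esym (Suc l) ks) * (const (ebeta \<gamma> ks) * D (incl \<gamma>)) = const (ebeta (incl \<gamma>) ks) * D (incl \<gamma>)"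
            by (simp add: ebeta_incl const_mult mult_ac)
        qed
        also have "\<dots> = 0" using less.prems(1) len split[of ks] D0 \<open>Suc l \<le> n\<close> by simp
        finally show "const (esym (Suc l) ks) * R ks = 0" .
      qed
      hence "\<forall>ks. length ks = Suc l \<longrightarrow> R ks = 0" by blast
      moreover have "n - Suc l < n" using that by simp
      ultimately show ?thesis using less.IH[where y="n - Suc l" and D="\<lambda>\<gamma>. D (incl \<gamma>)" and \<beta>=\<gamma>] that unfolding R_def by blast
    qed
    from less.prems(2) show ?case
    proof (cases rule: W_cases)
      case (zero \<beta>') thus ?thesis using D0 by simp
    next
      case (pos \<gamma>) thus ?thesis using Dpos by simp
    qed
  qed
qed

lemma indep_sub: "S \<subseteq> W n l \<Longrightarrow> (\<forall>ks. length ks = l \<longrightarrow> (\<Sum>\<beta>\<in>S. const (ebeta \<beta> ks) * D \<beta>) = 0) \<Longrightarrow> \<beta> \<in> S \<Longrightarrow> D \<beta> = 0"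
proof -
  assume S: "S \<subseteq> W n l" and z: "\<forall>ks. length ks = l \<longrightarrow> (\<Sum>\<beta>\<in>S. const (ebeta \<beta> ks) * D \<beta>) = 0" and b: "\<beta> \<in> S"
  define D' where "D' \<beta> = (if \<beta> \<in> S then D \<beta> else 0)" for \<beta>
  have "(\<Sum>\<beta>\<in>W n l. const (ebeta \<beta> ks) * D' \<beta>) = (\<Sum>\<beta>\<in>S. const (ebeta \<beta> ks) * D \<beta>)" for ks
    by (rule sum.mono_neutral_cong_right) (use S finite_W in \<open>auto simp: D'_def\<close>)
  hence "D' \<beta> = 0" using indep[where l=l and n=n and D=D' and \<beta>=\<beta>] z b S by auto
  thus ?thesis using b by (simp add: D'_def)
qed

lemma Bset_alt: "Bset n l = {\<beta>. length \<beta> = l \<and> 1 \<le> l \<and> 1 \<le> \<beta> ! (l - 1) \<and> wsum \<beta> = n}"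
  unfolding Bset_def wsum_def by auto

lemma Bset_W: "Bset n l \<subseteq> W n l"
  unfolding Bset_alt W_def by auto

lemma inj_incl: "inj_on incl {\<gamma>. \<gamma> \<noteq> []}"
proof (rule inj_onI)
  fix x y assume "x \<in> {\<gamma>. \<gamma> \<noteq> []}" "y \<in> {\<gamma>. \<gamma> \<noteq> []}" "incl x = incl y"
  hence ne: "x \<noteq> []" "y \<noteq> []" by auto
  have "butlast x = butlast y" "last x = last y" using \<open>incl x = incl y\<close> by (auto simp: incl_def)
  thus "x = y" using append_butlast_last_id[OF ne(1)] append_butlast_last_id[OF ne(2)] by metis
qed

lemma Bset_eq: "Bset n (Suc m) = (if Suc m \<le> n then incl ` W (n - Suc m) (Suc m) else {})"
proof (intro equalityI subsetI)
  fix \<beta> assume b: "\<beta> \<in> Bset n (Suc m)"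
  hence "\<beta> \<noteq> []" by (auto simp: Bset_alt)
  then obtain xs a where xa: "\<beta> = xs @ [a]" by (cases \<beta> rule: rev_exhaust) auto
  have lx: "length xs = m" "1 \<le> a" "wsum xs + Suc m * a = n" using b by (auto simp: Bset_alt xa wsum_snoc nth_append)
  then obtain c where c: "a = Suc c" by (cases a) auto
  have "Suc m \<le> n" using lx c by simp
  moreover have "xs @ [c] \<in> W (n - Suc m) (Suc m)" using lx c by (auto simp: W_def wsum_snoc)
  moreover have "\<beta> = incl (xs @ [c])" by (simp add: xa c incl_def)
  ultimately show "\<beta> \<in> (if Suc m \<le> n then incl ` W (n - Suc m) (Suc m) else {})" by auto
next
  fix \<beta> assume "\<beta> \<in> (if Suc m \<le> n then incl ` W (n - Suc m) (Suc m) else {})"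
  then obtain \<gamma> where g: "Suc m \<le> n" "\<gamma> \<in> W (n - Suc m) (Suc m)" "\<beta> = incl \<gamma>" by (auto split: if_splits)
  hence "\<gamma> \<noteq> []" by (auto simp: W_def)
  then obtain xs a where xa: "\<gamma> = xs @ [a]" by (cases \<gamma> rule: rev_exhaust) auto
  show "\<beta> \<in> Bset n (Suc m)" using g by (auto simp: Bset_alt W_def xa incl_def wsum_snoc nth_append)
qed

lemma Bset_sum: "(\<Sum>\<beta>\<in>Bset n (Suc m). T \<beta>) = (if Suc m \<le> n then (\<Sum>\<gamma>\<in>W (n - Suc m) (Suc m). T (incl \<gamma>)) else 0)"
proof (cases "Suc m \<le> n")
  case True
  have "inj_on incl (W (n - Suc m) (Suc m))" by (rule inj_on_subset[OF inj_incl]) (auto simp: W_def)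
  thus ?thesis using True by (simp add: Bset_eq sum.reindex)
qed (simp add: Bset_eq)

definition XP :: "nat \<Rightarrow> nat list \<Rightarrow> poly_A" where
  "XP l is = (\<Prod>j<l. X (is ! j))"

definition Cp :: "nat \<Rightarrow> nat \<Rightarrow> nat list set" where
  "Cp l n = {is. length is = l \<and> (\<forall>a\<in>set is. a \<ge> 1) \<and> sum_list is = n}"

lemma gen_lhs_alt: "length ks = l \<Longrightarrow> gen_lhs n ks = (\<Sum>is\<in>Cp l n. const (mon ks is) * XP l is)"
  unfolding gen_lhs_def Cp_def mon_def XP_def by simp

lemma Cp_eq: "Cp l n = (if l \<le> n then map Suc ` Comp l (n - l) else {})"
proof (intro equalityI subsetI)
  fix x assume x: "x \<in> Cp l n"
  define y where "y = map (\<lambda>x. x - 1) x"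
  have "map Suc y = x" unfolding y_def by (rule pos_char) (use x in \<open>auto simp: Cp_def all_set_conv_all_nth\<close>)
  hence xy: "x = map Suc y" by simp
  have "length y = l" "sum_list y + l = n" using x sum_list_map_Suc[of y] unfolding xy by (auto simp: Cp_def)
  thus "x \<in> (if l \<le> n then map Suc ` Comp l (n - l) else {})" using xy by (auto simp: Comp_def)
next
  fix x assume "x \<in> (if l \<le> n then map Suc ` Comp l (n - l) else {})"
  then obtain y where "l \<le> n" "y \<in> Comp l (n - l)" "x = map Suc y" by (auto split: if_splits)
  thus "x \<in> Cp l n" by (auto simp: Cp_def Comp_def sum_list_map_Suc)
qed

lemma finite_Cp: "finite (Cp l n)" by (simp add: Cp_eq finite_Comp)

lemma gfam_ex:
  assumes "1 \<le> l"
  shows "\<exists>G. (\<forall>\<beta>. \<beta> \<notin> Bset n l \<longrightarrow> G \<beta> = 0) \<and>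
      (\<forall>ks. length ks = l \<longrightarrow> gen_lhs n ks = (\<Sum>\<beta>\<in>Bset n l. const (ebeta \<beta> ks) * G \<beta>))"
proof (cases "l \<le> n")
  case False
  have "Bset n l = {}" using False assms by (cases l) (auto simp: Bset_eq)
  moreover have "gen_lhs n ks = 0" if "length ks = l" for ks using False that by (simp add: gen_lhs_alt Cp_eq)
  ultimately show ?thesis by (intro exI[of _ "\<lambda>_. 0"]) auto
next
  case True
  obtain m where m: "l = Suc m" using assms by (cases l) auto
  define inner where "inner = polyf (\<lambda>js. XP l (map Suc js)) (Comp l (n - l))"
  have hom: "hom l (n - l) inner" unfolding hom_def inner_def using finite_Comp by blast
  have sym: "symf l inner" unfolding inner_def
  proof (rule symf_polyf)
    fix "is" i j assume a: "is \<in> Comp l (n - l)" "i < l" "j < l"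
    show "swapl i j is \<in> Comp l (n - l) \<and> XP l (map Suc (swapl i j is)) = XP l (map Suc is)"
    proof
      show "swapl i j is \<in> Comp l (n - l)" using a by (auto simp: Comp_def sum_list_swapl)
      have "XP l (map Suc (swapl i j is)) = (\<Prod>k<l. X (Suc (is ! tr i j k)))"
        unfolding XP_def using a by (auto simp: Comp_def nth_swapl intro!: prod.cong)
      also have "\<dots> = (\<Prod>k<l. X (Suc (is ! k)))" by (rule prod_tr[OF a(2,3)])
      also have "\<dots> = XP l (map Suc is)" unfolding XP_def using a by (auto simp: Comp_def intro!: prod.cong)
      finally show "XP l (map Suc (swapl i j is)) = XP l (map Suc is)" .
    qed
  qed (auto simp: Comp_def)
  obtain C where C: "\<forall>ks. length ks = l \<longrightarrow> inner ks = (\<Sum>\<gamma>\<in>W (n - l) l. const (ebeta \<gamma> ks) * C \<gamma>)"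
    using ftsp[OF hom sym] by blast
  define G where "G \<beta> = (if \<beta> \<in> Bset n l then C (butlast \<beta> @ [last \<beta> - 1]) else 0)" for \<beta>
  have inj: "inj_on (map Suc) (Comp l (n - l))" by (auto simp: inj_on_def)
  have "gen_lhs n ks = (\<Sum>\<beta>\<in>Bset n l. const (ebeta \<beta> ks) * G \<beta>)" if len: "length ks = l" for ks
  proof -
    have "gen_lhs n ks = (\<Sum>js\<in>Comp l (n - l). const (mon ks (map Suc js)) * XP l (map Suc js))"
      using True len inj by (simp add: gen_lhs_alt Cp_eq sum.reindex)
    also have "\<dots> = const (esym l ks) * inner ks"
      unfolding inner_def polyf_def sum_distrib_left using len
      by (intro sum.cong refl) (auto simp: Comp_def mon_Suc const_mult mult.assoc)
    also have "\<dots> = (\<Sum>\<gamma>\<in>W (n - l) l. const (ebeta (incl \<gamma>) ks) * C \<gamma>)"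
      unfolding C[rule_format, OF len] sum_distrib_left
    proof (intro sum.cong refl)
      fix \<gamma> assume "\<gamma> \<in> W (n - l) l"
      hence "\<gamma> \<noteq> []" "length \<gamma> = l" using m by (auto simp: W_def)
      thus "const (esym l ks) * (const (ebeta \<gamma> ks) * C \<gamma>) = const (ebeta (incl \<gamma>) ks) * C \<gamma>"
        by (simp add: ebeta_incl const_mult mult_ac)
    qed
    also have "\<dots> = (\<Sum>\<gamma>\<in>W (n - l) l. const (ebeta (incl \<gamma>) ks) * G (incl \<gamma>))"
    proof (intro sum.cong refl)
      fix \<gamma> assume g: "\<gamma> \<in> W (n - l) l"
      hence "\<gamma> \<noteq> []" using m by (auto simp: W_def)
      moreover have "incl \<gamma> \<in> Bset n l" using g True m by (auto simp: Bset_eq)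
      ultimately show "const (ebeta (incl \<gamma>) ks) * C \<gamma> = const (ebeta (incl \<gamma>) ks) * G (incl \<gamma>)"
        by (simp add: G_def incl_def)
    qed
    also have "\<dots> = (\<Sum>\<beta>\<in>Bset n l. const (ebeta \<beta> ks) * G \<beta>)"
      using True m by (simp add: Bset_sum)
    finally show ?thesis .
  qed
  thus ?thesis by (intro exI[of _ G]) (auto simp: G_def)
qed

lemma gfam_prop:
  assumes "1 \<le> l"
  shows "(\<forall>\<beta>. \<beta> \<notin> Bset n l \<longrightarrow> gfam n l \<beta> = 0) \<and>
      (\<forall>ks. length ks = l \<longrightarrow> gen_lhs n ks = (\<Sum>\<beta>\<in>Bset n l. const (ebeta \<beta> ks) * gfam n l \<beta>))"
proof -
  have ex1: "\<exists>!G. (\<forall>\<beta>. \<beta> \<notin> Bset n l \<longrightarrow> G \<beta> = 0) \<and>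
      (\<forall>ks. length ks = l \<longrightarrow> gen_lhs n ks = (\<Sum>\<beta>\<in>Bset n l. const (ebeta \<beta> ks) * G \<beta>))"
  proof (rule ex_ex1I)
    show "\<exists>G. (\<forall>\<beta>. \<beta> \<notin> Bset n l \<longrightarrow> G \<beta> = 0) \<and>
      (\<forall>ks. length ks = l \<longrightarrow> gen_lhs n ks = (\<Sum>\<beta>\<in>Bset n l. const (ebeta \<beta> ks) * G \<beta>))"
      by (rule gfam_ex[OF assms])
  next
    fix G1 G2
    assume G1: "(\<forall>\<beta>. \<beta> \<notin> Bset n l \<longrightarrow> G1 \<beta> = 0) \<and>
      (\<forall>ks. length ks = l \<longrightarrow> gen_lhs n ks = (\<Sum>\<beta>\<in>Bset n l. const (ebeta \<beta> ks) * G1 \<beta>))"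
      and G2: "(\<forall>\<beta>. \<beta> \<notin> Bset n l \<longrightarrow> G2 \<beta> = 0) \<and>
      (\<forall>ks. length ks = l \<longrightarrow> gen_lhs n ks = (\<Sum>\<beta>\<in>Bset n l. const (ebeta \<beta> ks) * G2 \<beta>))"
    have z: "\<forall>ks. length ks = l \<longrightarrow> (\<Sum>\<beta>\<in>Bset n l. const (ebeta \<beta> ks) * (G1 \<beta> - G2 \<beta>)) = 0"
    proof (intro allI impI)
      fix ks :: "complex list" assume "length ks = l"
      hence e1: "gen_lhs n ks = (\<Sum>\<beta>\<in>Bset n l. const (ebeta \<beta> ks) * G1 \<beta>)"
        and e2: "gen_lhs n ks = (\<Sum>\<beta>\<in>Bset n l. const (ebeta \<beta> ks) * G2 \<beta>)" using G1 G2 by blast+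
      have "(\<Sum>\<beta>\<in>Bset n l. const (ebeta \<beta> ks) * G1 \<beta>) - (\<Sum>\<beta>\<in>Bset n l. const (ebeta \<beta> ks) * G2 \<beta>) = 0"
        unfolding e1[symmetric] e2[symmetric] by simp
      thus "(\<Sum>\<beta>\<in>Bset n l. const (ebeta \<beta> ks) * (G1 \<beta> - G2 \<beta>)) = 0"
        by (simp add: right_diff_distrib sum_subtractf)
    qed
    show "G1 = G2"
    proof
      fix \<beta> show "G1 \<beta> = G2 \<beta>"
      proof (cases "\<beta> \<in> Bset n l")
        case True
        have "G1 \<beta> - G2 \<beta> = 0"
          by (rule indep_sub[OF Bset_W z True])
        thus ?thesis by simp
      next
        case False thus ?thesis using G1 G2 by simp
      qed
    qed
  qed
  from theI'[OF ex1] show ?thesis unfolding gfam_def .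
qed

lemma d_add: "is_d d \<Longrightarrow> d (p + q) = d p + d q" unfolding is_d_def by blast
lemma d_mult: "is_d d \<Longrightarrow> d (p * q) = p * d q + q * d p" unfolding is_d_def by blast
lemma d_const: "is_d d \<Longrightarrow> d (const c * p) = const c * d p" unfolding is_d_def by blast

lemma d_zero: "is_d d \<Longrightarrow> d 0 = 0"
proof -
  assume dd: "is_d d"
  have "d (0 + 0) = d 0 + d 0" by (rule d_add[OF dd])
  hence "d 0 + d 0 = d 0 + 0" by simp
  thus ?thesis by (rule add_left_imp_eq)
qed

lemma d_one: "is_d d \<Longrightarrow> d 1 = 0"
proof -
  assume dd: "is_d d"
  have "d (1 * 1) = 1 * d 1 + 1 * d 1" by (rule d_mult[OF dd])
  hence "d 1 + d 1 = d 1 + 0" by simp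
  thus ?thesis by (rule add_left_imp_eq)
qed

lemma d_sum: "is_d d \<Longrightarrow> d (\<Sum>x\<in>A. f x) = (\<Sum>x\<in>A. d (f x))"
  by (induction A rule: infinite_finite_induct) (auto simp: d_zero d_add)

lemma d_prod:
  assumes dd: "is_d d" and fin: "finite A"
  shows "d (\<Prod>x\<in>A. f x) = (\<Sum>x\<in>A. (\<Prod>y\<in>A - {x}. f y) * d (f x))"
  using fin
proof (induction A rule: finite_induct)
  case empty then show ?case by (simp add: d_one[OF dd])
next
  case (insert a A)
  have "d (\<Prod>x\<in>insert a A. f x) = f a * d (\<Prod>x\<in>A. f x) + (\<Prod>x\<in>A. f x) * d (f a)"
    using insert by (simp add: d_mult[OF dd])
  also have "\<dots> = (\<Sum>x\<in>A. (\<Prod>y\<in>insert a A - {x}. f y) * d (f x)) + (\<Prod>x\<in>A. f x) * d (f a)"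
  proof -
    have "f a * d (\<Prod>x\<in>A. f x) = (\<Sum>x\<in>A. (\<Prod>y\<in>insert a A - {x}. f y) * d (f x))"
      unfolding insert.IH sum_distrib_left
    proof (intro sum.cong refl)
      fix x assume "x \<in> A"
      hence "insert a A - {x} = insert a (A - {x})" "a \<notin> A - {x}" using insert by auto
      thus "f a * ((\<Prod>y\<in>A - {x}. f y) * d (f x)) = (\<Prod>y\<in>insert a A - {x}. f y) * d (f x)"
        using insert by (simp add: mult.assoc)
    qed
    thus ?thesis by simp
  qed
  also have "\<dots> = (\<Sum>x\<in>insert a A. (\<Prod>y\<in>insert a A - {x}. f y) * d (f x))"
    using insert by (simp add: add.commute)
  finally show ?case .
qed

lemma dX: "is_d d \<Longrightarrow> 1 \<le> a \<Longrightarrow> d (X a) = (if a = 1 then 0 else X (a - 1))"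
  unfolding is_d_def by auto

lemma XP_upd:
  assumes "length is = l" "j < l"
  shows "XP l (is[j := v]) = X v * (\<Prod>k\<in>{..<l} - {j}. X (is ! k))"
proof -
  have "XP l (is[j := v]) = X (is[j := v] ! j) * (\<Prod>k\<in>{..<l} - {j}. X (is[j := v] ! k))"
    unfolding XP_def using assms by (simp add: prod.remove)
  also have "\<dots> = X v * (\<Prod>k\<in>{..<l} - {j}. X (is ! k))"
    using assms by (auto intro!: prod.cong)
  finally show ?thesis .
qed

lemma mon_upd:
  assumes "length is = length ks" "j < length ks"
  shows "mon ks (is[j := is ! j + 1]) = ks ! j * mon ks is"
proof -
  let ?l = "length ks"
  have "mon ks (is[j := is ! j + 1]) = ks ! j ^ (is ! j + 1) * (\<Prod>k\<in>{..<?l} - {j}. ks ! k ^ is[j := is ! j + 1] ! k)"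
    unfolding mon_def using assms by (simp add: prod.remove)
  also have "(\<Prod>k\<in>{..<?l} - {j}. ks ! k ^ is[j := is ! j + 1] ! k) = (\<Prod>k\<in>{..<?l} - {j}. ks ! k ^ is ! k)"
    by (intro prod.cong) auto
  also have "mon ks is = ks ! j ^ is ! j * (\<Prod>k\<in>{..<?l} - {j}. ks ! k ^ is ! k)"
    unfolding mon_def using assms by (simp add: prod.remove)
  ultimately show ?thesis by simp
qed

lemma dXP:
  assumes dd: "is_d d" and "is \<in> Cp l n"
  shows "d (XP l is) = (\<Sum>j<l. if 2 \<le> is ! j then XP l (is[j := is ! j - 1]) else 0)"
proof -
  have len: "length is = l" and pos: "\<And>j. j < l \<Longrightarrow> 1 \<le> is ! j"
    using assms(2) by (auto simp: Cp_def)
  have "d (XP l is) = (\<Sum>j<l. (\<Prod>k\<in>{..<l} - {j}. X (is ! k)) * d (X (is ! j)))"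
    unfolding XP_def by (rule d_prod[OF dd]) simp
  also have "\<dots> = (\<Sum>j<l. if 2 \<le> is ! j then XP l (is[j := is ! j - 1]) else 0)"
  proof (intro sum.cong refl)
    fix j assume j: "j \<in> {..<l}"
    show "(\<Prod>k\<in>{..<l} - {j}. X (is ! k)) * d (X (is ! j)) = (if 2 \<le> is ! j then XP l (is[j := is ! j - 1]) else 0)"
      using pos[of j] j by (auto simp: dX[OF dd] XP_upd[OF len] mult.commute)
  qed
  finally show ?thesis .
qed

lemma Cp_up:
  assumes "1 \<le> n" "j < l"
  shows "{is \<in> Cp l n. 2 \<le> is ! j} = (\<lambda>js. js[j := js ! j + 1]) ` Cp l (n - 1)"
proof (intro equalityI subsetI)
  fix x assume x: "x \<in> {is \<in> Cp l n. 2 \<le> is ! j}"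
  define y where "y = x[j := x ! j - 1]"
  have lx: "length x = l" using x by (simp add: Cp_def)
  have "y[j := y ! j + 1] = x" using x lx assms by (simp add: y_def)
  moreover have "y \<in> Cp l (n - 1)"
  proof -
    have "set y \<subseteq> insert (x ! j - 1) (set x)" unfolding y_def by (rule set_update_subset_insert)
    hence "\<forall>a\<in>set y. 1 \<le> a" using x by (auto simp: Cp_def)
    moreover have "sum_list y = n - 1" using x lx assms unfolding y_def
      by (simp add: sum_list_update Cp_def)
    ultimately show ?thesis using lx by (simp add: Cp_def y_def)
  qed
  ultimately show "x \<in> (\<lambda>js. js[j := js ! j + 1]) ` Cp l (n - 1)" by force
next
  fix x assume "x \<in> (\<lambda>js. js[j := js ! j + 1]) ` Cp l (n - 1)"
  then obtain y where y: "y \<in> Cp l (n - 1)" "x = y[j := y ! j + 1]" by blast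
  have ly: "length y = l" using y by (simp add: Cp_def)
  have "1 \<le> y ! j" using y(1) ly assms(2) by (auto simp: Cp_def)
  moreover have "set x \<subseteq> insert (y ! j + 1) (set y)" unfolding y(2) by (rule set_update_subset_insert)
  moreover have "sum_list x = n" using y ly assms by (simp add: sum_list_update Cp_def)
  ultimately show "x \<in> {is \<in> Cp l n. 2 \<le> is ! j}" using y ly assms by (auto simp: Cp_def)
qed

lemma d_gen:
  assumes dd: "is_d d" and len: "length ks = l" and n: "1 \<le> n"
  shows "d (gen_lhs n ks) = const (esym 1 ks) * gen_lhs (n - 1) ks"
proof -
  have "d (gen_lhs n ks) = (\<Sum>is\<in>Cp l n. const (mon ks is) * d (XP l is))"
    unfolding gen_lhs_alt[OF len] d_sum[OF dd] by (simp add: d_const[OF dd])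
  also have "\<dots> = (\<Sum>is\<in>Cp l n. \<Sum>j<l. if 2 \<le> is ! j then const (mon ks is) * XP l (is[j := is ! j - 1]) else 0)"
    by (intro sum.cong refl) (auto simp: dXP[OF dd] sum_distrib_left intro!: sum.cong)
  also have "\<dots> = (\<Sum>j<l. \<Sum>is\<in>Cp l n. if 2 \<le> is ! j then const (mon ks is) * XP l (is[j := is ! j - 1]) else 0)"
    by (rule sum.swap)
  also have "\<dots> = (\<Sum>j<l. const (ks ! j) * gen_lhs (n - 1) ks)"
  proof (intro sum.cong refl)
    fix j assume j: "j \<in> {..<l}"
    let ?up = "\<lambda>js. js[j := js ! j + 1]"
    have inj: "inj_on ?up (Cp l (n - 1))"
    proof (rule inj_onI)
      fix x y assume "x \<in> Cp l (n - 1)" "y \<in> Cp l (n - 1)" "?up x = ?up y"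
      hence "(?up x)[j := ?up x ! j - 1] = (?up y)[j := ?up y ! j - 1]" by simp
      thus "x = y" using \<open>x \<in> Cp l (n - 1)\<close> \<open>y \<in> Cp l (n - 1)\<close> j by (simp add: Cp_def)
    qed
    have "(\<Sum>is\<in>Cp l n. if 2 \<le> is ! j then const (mon ks is) * XP l (is[j := is ! j - 1]) else 0)
        = (\<Sum>is\<in>{is \<in> Cp l n. 2 \<le> is ! j}. const (mon ks is) * XP l (is[j := is ! j - 1]))"
      by (rule sum.inter_filter[OF finite_Cp, symmetric])
    also have "\<dots> = (\<Sum>js\<in>Cp l (n - 1). const (mon ks (?up js)) * XP l ((?up js)[j := ?up js ! j - 1]))"
    proof -
      have eq: "{is \<in> Cp l n. 2 \<le> is ! j} = ?up ` Cp l (n - 1)" using Cp_up[OF n, where j=j and l=l] j by simp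
      show ?thesis unfolding eq by (simp only: sum.reindex[OF inj] comp_def)
    qed
    also have "\<dots> = (\<Sum>js\<in>Cp l (n - 1). const (ks ! j) * (const (mon ks js) * XP l js))"
    proof (intro sum.cong refl)
      fix js assume "js \<in> Cp l (n - 1)"
      hence ljs: "length js = length ks" using len by (simp add: Cp_def)
      have m: "mon ks (js[j := js ! j + 1]) = ks ! j * mon ks js" using mon_upd[OF ljs, of j] j len by simp
      show "const (mon ks (?up js)) * XP l ((?up js)[j := ?up js ! j - 1]) = const (ks ! j) * (const (mon ks js) * XP l js)"
        unfolding m using j len ljs by (simp add: const_mult mult.assoc)
    qed
    also have "\<dots> = const (ks ! j) * gen_lhs (n - 1) ks"
      unfolding gen_lhs_alt[OF len] sum_distrib_left ..
    finally show "(\<Sum>is\<in>Cp l n. if 2 \<le> is ! j then const (mon ks is) * XP l (is[j := is ! j - 1]) else 0)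
        = const (ks ! j) * gen_lhs (n - 1) ks" .
  qed
  also have "\<dots> = const (esym 1 ks) * gen_lhs (n - 1) ks"
    unfolding esym_one[OF len] const_sum sum_distrib_right ..
  finally show ?thesis .
qed

lemma ebeta_Cons_Suc: "ebeta (Suc a # t) ks = esym 1 ks * ebeta (a # t) ks"
  unfolding ebeta_def by (simp only: length_Cons prod.lessThan_Suc_shift) simp

lemma wsum_Cons: "wsum (a # t) = a + (\<Sum>j<length t. (j + 2) * t ! j)"
  unfolding wsum_def by (simp only: length_Cons sum.lessThan_Suc_shift) simp

lemma main_d:
  assumes dd: "is_d d" and l: "1 \<le> l" and b: "\<beta> \<in> Bset n l"
  shows "d (gfam n l \<beta>) = (if \<beta> ! 0 = 0 then 0 else gfam (n - 1) l ((\<beta> ! 0 - 1) # tl \<beta>))"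
proof -
  have n1: "1 \<le> n"
  proof -
    have bl: "length \<beta> = l" "1 \<le> \<beta> ! (l - 1)" "wsum \<beta> = n" using b by (auto simp: Bset_alt)
    have "\<beta> ! (l - 1) \<le> (l - 1 + 1) * \<beta> ! (l - 1)" by simp
    also have "\<dots> \<le> wsum \<beta>" unfolding wsum_def
      by (rule member_le_sum[where f="\<lambda>j. (j+1) * \<beta> ! j"]) (use bl l in auto)
    finally show ?thesis using bl by simp
  qed
  define R where "R \<beta> = (if \<beta> ! 0 = 0 then 0 else gfam (n - 1) l ((\<beta> ! 0 - 1) # tl \<beta>))" for \<beta>
  define inc0 where "inc0 \<beta> = Suc (\<beta> ! 0) # tl \<beta>" for \<beta> :: "nat list"
  have P1: "\<forall>ks. length ks = l \<longrightarrow> gen_lhs n ks = (\<Sum>\<beta>\<in>Bset n l. const (ebeta \<beta> ks) * gfam n l \<beta>)"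
    using gfam_prop[OF l, of n] by blast
  have P0: "\<forall>ks. length ks = l \<longrightarrow> gen_lhs (n - 1) ks = (\<Sum>\<beta>\<in>Bset (n - 1) l. const (ebeta \<beta> ks) * gfam (n - 1) l \<beta>)"
    and P0z: "\<forall>\<beta>. \<beta> \<notin> Bset (n - 1) l \<longrightarrow> gfam (n - 1) l \<beta> = 0"
    using gfam_prop[OF l, of "n - 1"] by blast+
  have ne: "\<beta>' \<noteq> []" if "\<beta>' \<in> Bset m l" for \<beta>' m using that l by (auto simp: Bset_alt)
  have inc_B: "inc0 \<beta>' \<in> Bset n l" if bb: "\<beta>' \<in> Bset (n - 1) l" for \<beta>'
  proof -
    obtain a t where at: "\<beta>' = a # t" using ne[OF bb] by (cases \<beta>') auto
    have c: "length (a # t) = l" "1 \<le> (a # t) ! (l - 1)" "wsum (a # t) = n - 1" using bb at by (auto simp: Bset_alt)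
    have "1 \<le> (Suc a # t) ! (l - 1)"
    proof (cases "l - 1")
      case 0 thus ?thesis by simp
    next
      case (Suc k)
      have "1 \<le> (a # t) ! Suc k" using c(2) unfolding Suc .
      thus ?thesis unfolding Suc by simp
    qed
    thus ?thesis using c n1 l by (auto simp: Bset_alt inc0_def at wsum_Cons)
  qed
  have inj: "inj_on inc0 (Bset (n - 1) l)"
  proof (rule inj_onI)
    fix x y assume x: "x \<in> Bset (n - 1) l" and y: "y \<in> Bset (n - 1) l" and e: "inc0 x = inc0 y"
    obtain a t where at: "x = a # t" using ne[OF x] by (cases x) auto
    obtain a' t' where at': "y = a' # t'" using ne[OF y] by (cases y) auto
    show "x = y" using e by (simp add: inc0_def at at')
  qed
  have key: "\<forall>ks. length ks = l \<longrightarrow> (\<Sum>\<beta>\<in>Bset n l. const (ebeta \<beta> ks) * (d (gfam n l \<beta>) - R \<beta>)) = 0"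
  proof (intro allI impI)
    fix ks :: "complex list" assume len: "length ks = l"
    have e1: "(\<Sum>\<beta>\<in>Bset n l. const (ebeta \<beta> ks) * d (gfam n l \<beta>)) = d (gen_lhs n ks)"
      unfolding P1[rule_format, OF len] d_sum[OF dd] by (simp add: d_const[OF dd])
    also have "\<dots> = const (esym 1 ks) * gen_lhs (n - 1) ks" by (rule d_gen[OF dd len n1])
    also have "\<dots> = (\<Sum>\<beta>'\<in>Bset (n - 1) l. const (ebeta (inc0 \<beta>') ks) * gfam (n - 1) l \<beta>')"
      unfolding P0[rule_format, OF len] sum_distrib_left
    proof (intro sum.cong refl)
      fix \<beta>' assume "\<beta>' \<in> Bset (n - 1) l"
      then obtain a t where at: "\<beta>' = a # t" using ne by (cases \<beta>') auto
      show "const (esym 1 ks) * (const (ebeta \<beta>' ks) * gfam (n - 1) l \<beta>') = const (ebeta (inc0 \<beta>') ks) * gfam (n - 1) l \<beta>'"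
        by (simp add: at inc0_def ebeta_Cons_Suc const_mult mult.assoc)
    qed
    also have "\<dots> = (\<Sum>\<beta>'\<in>Bset (n - 1) l. const (ebeta (inc0 \<beta>') ks) * R (inc0 \<beta>'))"
    proof (intro sum.cong refl)
      fix \<beta>' assume "\<beta>' \<in> Bset (n - 1) l"
      then obtain a t where at: "\<beta>' = a # t" using ne by (cases \<beta>') auto
      show "const (ebeta (inc0 \<beta>') ks) * gfam (n - 1) l \<beta>' = const (ebeta (inc0 \<beta>') ks) * R (inc0 \<beta>')"
        by (simp add: at inc0_def R_def)
    qed
    also have "\<dots> = (\<Sum>\<beta>\<in>inc0 ` Bset (n - 1) l. const (ebeta \<beta> ks) * R \<beta>)"
      by (simp only: sum.reindex[OF inj] comp_def)
    also have "\<dots> = (\<Sum>\<beta>\<in>Bset n l. const (ebeta \<beta> ks) * R \<beta>)"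
    proof (rule sum.mono_neutral_left)
      show "finite (Bset n l)" by (rule finite_subset[OF Bset_W finite_W])
      show "inc0 ` Bset (n - 1) l \<subseteq> Bset n l" using inc_B by blast
      show "\<forall>\<beta>\<in>Bset n l - inc0 ` Bset (n - 1) l. const (ebeta \<beta> ks) * R \<beta> = 0"
      proof
        fix \<beta> assume bb: "\<beta> \<in> Bset n l - inc0 ` Bset (n - 1) l"
        have bB: "\<beta> \<in> Bset n l" and nimg: "\<beta> \<notin> inc0 ` Bset (n - 1) l" using bb by blast+
        have "\<beta> \<noteq> []" by (rule ne[OF bB])
        then obtain a t where at: "\<beta> = a # t" by (cases \<beta>) auto
        show "const (ebeta \<beta> ks) * R \<beta> = 0"
        proof (cases a)
          case 0 thus ?thesis unfolding R_def at by simp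
        next
          case (Suc c)
          have i: "inc0 (c # t) = \<beta>" unfolding inc0_def at Suc by simp
          have "c # t \<notin> Bset (n - 1) l"
          proof
            assume "c # t \<in> Bset (n - 1) l"
            hence "inc0 (c # t) \<in> inc0 ` Bset (n - 1) l" by (rule imageI)
            thus False using nimg unfolding i by blast
          qed
          hence "gfam (n - 1) l (c # t) = 0" using P0z by blast
          thus ?thesis unfolding R_def at Suc by simp
        qed
      qed
    qed
    finally have "(\<Sum>\<beta>\<in>Bset n l. const (ebeta \<beta> ks) * d (gfam n l \<beta>)) = (\<Sum>\<beta>\<in>Bset n l. const (ebeta \<beta> ks) * R \<beta>)" .
    thus "(\<Sum>\<beta>\<in>Bset n l. const (ebeta \<beta> ks) * (d (gfam n l \<beta>) - R \<beta>)) = 0"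
      by (simp add: right_diff_distrib sum_subtractf)
  qed
  have "d (gfam n l \<beta>) - R \<beta> = 0" by (rule indep_sub[OF Bset_W key b])
  thus ?thesis by (simp add: R_def)
qed

theorem lemma3p2:
  fixes d :: "poly_A \<Rightarrow> poly_A" and n l i :: nat and \<beta> :: "nat list"
  assumes "is_d d"
    and "l \<ge> 1" and "n \<ge> l"
    and "\<beta> \<in> Bset_i n l i"
  shows "d (g \<beta>) = (if i = 0 then 0 else g ((\<beta> ! 0 - 1) # tl \<beta>))"
proof (cases "l > 1")
  case True
  hence b: "\<beta> \<in> Bset n l" "\<beta> ! 0 = i" using assms(4) by (auto simp: Bset_i_def)
  have bl: "length \<beta> = l" "wsum \<beta> = n" using b by (auto simp: Bset_alt)
  have gb: "g \<beta> = gfam n l \<beta>" unfolding g_def wsum_def[symmetric] using bl by simp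
  have ne: "\<beta> \<noteq> []" using bl True by auto
  then obtain a t where at: "\<beta> = a # t" by (cases \<beta>) auto
  have "g ((\<beta> ! 0 - 1) # tl \<beta>) = gfam (n - 1) l ((\<beta> ! 0 - 1) # tl \<beta>)" if "i \<noteq> 0"
  proof -
    have "wsum ((a - 1) # t) = n - 1" using bl that b(2) by (simp add: at wsum_Cons)
    thus ?thesis unfolding g_def wsum_def[symmetric] using bl by (simp add: at)
  qed
  thus ?thesis using main_d[OF assms(1,2) b(1)] b(2) gb by simp
next
  case False
  hence l1: "l = 1" using assms(2) by simp
  hence b: "\<beta> = [i + 1]" "n = i + 1" using assms(4) by (auto simp: Bset_i_def split: if_splits)
  have bB: "\<beta> \<in> Bset n 1" using b by (simp add: Bset_alt wsum_def)
  have gb: "g \<beta> = gfam n 1 \<beta>" using b by (simp add: g_def)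
  have dg: "d (g \<beta>) = gfam i 1 [i]" using main_d[OF assms(1) _ bB] gb b by simp
  have gi: "g [i] = gfam i 1 [i]" by (simp add: g_def)
  show ?thesis
  proof (cases "i = 0")
    case True
    have "[0] \<notin> Bset 0 1" by (simp add: Bset_alt)
    hence "gfam 0 1 [0] = 0" using gfam_prop[of 1 0] by simp
    thus ?thesis using dg True by simp
  next
    case False thus ?thesis using dg gi b by simp
  qed
qed

end
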